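(* Suppose Assumptions 1 and 2 hold. Then $\lim_{n\to\infty}\|\Gamma D_n v\|_V=0$ for every $v\in V$ (with $n\in\mathbb N$ large). Moreover, defining for sufficiently large $n\in\mathbb N$ the operators $\Gamma_n\in\mathcal L(X,V)$ by $\Gamma_n x:=\Gamma\, nR(n,A)x$, one has $$\lim_{n\to\infty}\|\Gamma_n z-\Gamma z\|_V=0\qquad\text{for all } z\in D(\tilde A).$$
   Context: Standing setting. $X$ and $V$ are real Banach lattices with positive cones $X_+$, $V_+$; an operator is positive if it maps positive elements to positive elements. $\tilde A:D(\tilde A)\subset X\to X$ is a closed, densely defined linear operator; $D(\tilde A)$ carries the graph norm, and $G,\Gamma:D(\tilde A)\to V$ are bounded linear operators. Assumption 1: (i) $A:=\tilde A|_{\ker G}$, with $D(A)=\ker G$, generates a $C_0$-semigroup $T=(T(t))_{t\ge0}$ on $X$, and $T$ is positive; (ii) $G$ is surjective. Under Assumption 1, for $\lambda\in\rho(A)$ the Dirichlet operator $D_\lambda:=(G|_{\ker(\lambda I-\tilde A)})^{-1}:V\to X$ exists and is bounded. $\omega_0(T)$ denotes the growth bound of $T$; $R(\lambda,A)=(\lambda I-A)^{-1}$. Assumption 2 (for a given $p\in[1,\infty)$): (i) $D_\lambda$ is positive for all sufficiently large real $\lambda$; (ii) $\Gamma$ is positive (i.e. $\Gamma(D(\tilde A)\cap X_+)\subset V_+$) and for some $\alpha>0$ there is $\gamma_\alpha>0$ with $\int_0^\alpha\|\Gamma T(t)x\|_V^p\,\mathrm dt\le\gamma_\alpha^p\|x\|_X^p$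 for all $x\in D(A)\cap X_+$; (iii) there is $\lambda_0>\omega_0(T)$ with $\sup_{\lambda\ge\lambda_0}\|\lambda D_\lambda v\|_X<\infty$ for every $v\in V$; (iv) for all $v\in V$ and $u^*\in V'$, $\lim_{\mathbb R\ni\lambda\to+\infty}\langle\Gamma D_\lambda v,u^*\rangle_{V,V'}=0$. *)

theory Defs
  imports "HOL-Analysis.Analysis"
begin

class banach_lattice = banach + ordered_real_vector + lattice +
  assumes lattice_norm: "sup x (- x) \<le> sup y (- y) \<Longrightarrow> norm x \<le> norm y"

definition linear_on_sub :: "'a::real_vector set \<Rightarrow> ('a \<Rightarrow> 'b::real_vector) \<Rightarrow> bool" where
  "linear_on_sub S f \<longleftrightarrow> subspace S \<and>
     (\<forall>x\<in>S. \<forall>y\<in>S. f (x + y) = f x + f y) \<and> (\<forall>c. \<forall>x\<in>S. f (c *\<^sub>R x) = c *\<^sub>R f x)"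

definition closed_dense_operator :: "'a::real_normed_vector set \<Rightarrow> ('a \<Rightarrow> 'a) \<Rightarrow> bool" where
  "closed_dense_operator Dom Op \<longleftrightarrow> linear_on_sub Dom Op \<and>
     closed {(x, Op x) | x. x \<in> Dom} \<and> closure Dom = UNIV"

definition graph_bounded :: "'a::real_normed_vector set \<Rightarrow> ('a \<Rightarrow> 'a) \<Rightarrow> ('a \<Rightarrow> 'b::real_normed_vector) \<Rightarrow> bool" where
  "graph_bounded Dom Op F \<longleftrightarrow> linear_on_sub Dom F \<and>
     (\<exists>C. \<forall>x\<in>Dom. norm (F x) \<le> C * (norm x + norm (Op x)))"

definition C0_semigroup :: "(real \<Rightarrow> 'a::real_normed_vector \<Rightarrow> 'a) \<Rightarrow> bool" where
  "C0_semigroup T \<longleftrightarrow> (\<forall>t\<ge>0. bounded_linear (T t)) \<and> T 0 = id \<and>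
     (\<forall>s\<ge>0. \<forall>t\<ge>0. T (s + t) = T s \<circ> T t) \<and>
     (\<forall>x. ((\<lambda>t. T t x) \<longlongrightarrow> x) (at_right 0))"

definition generates :: "'a::real_normed_vector set \<Rightarrow> ('a \<Rightarrow> 'a) \<Rightarrow> (real \<Rightarrow> 'a \<Rightarrow> 'a) \<Rightarrow> bool" where
  "generates Dom Op T \<longleftrightarrow> C0_semigroup T \<and>
     Dom = {x. \<exists>y. ((\<lambda>h. (1 / h) *\<^sub>R (T h x - x)) \<longlongrightarrow> y) (at_right 0)} \<and>
     (\<forall>x\<in>Dom. ((\<lambda>h. (1 / h) *\<^sub>R (T h x - x)) \<longlongrightarrow> Op x) (at_right 0))"

definition growth_bound :: "(real \<Rightarrow> 'a::real_normed_vector \<Rightarrow> 'a) \<Rightarrow> ereal" where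
  "growth_bound T = Inf {ereal w | w. \<exists>M. \<forall>t\<ge>0. \<forall>x. norm (T t x) \<le> M * exp (w * t) * norm x}"

definition resolvent :: "'a::real_vector set \<Rightarrow> ('a \<Rightarrow> 'a) \<Rightarrow> real \<Rightarrow> 'a \<Rightarrow> 'a" where
  "resolvent Dom Op l y = (THE x. x \<in> Dom \<and> l *\<^sub>R x - Op x = y)"

definition dirichlet :: "'a::real_vector set \<Rightarrow> ('a \<Rightarrow> 'a) \<Rightarrow> ('a \<Rightarrow> 'b) \<Rightarrow> real \<Rightarrow> 'b \<Rightarrow> 'a" where
  "dirichlet Dom At G l v = (THE x. x \<in> Dom \<and> l *\<^sub>R x - At x = 0 \<and> G x = v)"

end

theory Submission
  imports Defs "HOL-Library.Lattice_Algebras"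
begin

subclass (in banach_lattice) lattice_ab_group_add ..

context banach_lattice
begin

lemma abs_nonneg_bl: "0 \<le> sup x (- x)"
proof -
  have "x + - x \<le> sup x (- x) + sup x (- x)" by (intro add_mono) auto
  then show ?thesis by simp
qed

lemma sup_neg_pos: "0 \<le> a \<Longrightarrow> sup a (- a) = a"
  by (metis local.neg_le_0_iff_le local.order_trans local.sup.absorb1)

lemma norm_mono_pos: "0 \<le> a \<Longrightarrow> a \<le> b \<Longrightarrow> norm a \<le> norm b"
  by (metis local.order_trans local.lattice_norm local.sup_neg_pos)

lemma norm_pprt_le: "norm (pprt x) \<le> norm x"
proof (rule lattice_norm)
  have "pprt x \<le> sup x (- x)" unfolding pprt_def
    using abs_nonneg_bl by (meson local.sup.mono local.order_refl local.sup.bounded_iff local.sup_ge1)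
  then show "sup (pprt x) (- pprt x) \<le> sup x (- x)" by (simp add: sup_neg_pos)
qed

lemma norm_nprt_le: "norm (nprt x) \<le> norm x"
proof -
  have "norm (nprt x) = norm (pprt (- x))" by (simp add: pprt_neg)
  also have "\<dots> \<le> norm (- x)" by (rule norm_pprt_le)
  finally show ?thesis by simp
qed

end

lemma closed_nonneg: "closed {x::'a::banach_lattice. 0 \<le> x}"
unfolding closed_sequential_limits
proof (intro allI impI, elim conjE)
  fix s and l :: "'a::banach_lattice" assume s: "\<forall>n. s n \<in> {x. 0 \<le> x}" and l: "s \<longlonglongrightarrow> l"
  have le: "norm (nprt l) \<le> norm (l - s n)" for n
  proof -
    have "nprt (l - s n) \<le> nprt l" using s by (intro nprt_mono) auto
    then have "0 \<le> - nprt l" "- nprt l \<le> - nprt (l - s n)" by auto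
    then have "norm (- nprt l) \<le> norm (- nprt (l - s n))" by (rule norm_mono_pos)
    also have "\<dots> \<le> norm (l - s n)" using norm_nprt_le by simp
    finally show ?thesis by simp
  qed
  have "(\<lambda>n. norm (l - s n)) \<longlonglongrightarrow> 0"
    using tendsto_norm_zero[OF LIM_zero[OF l]] by (simp add: norm_minus_commute)
  then have "norm (nprt l) \<le> 0"
    by (intro tendsto_le[OF _ _ tendsto_const]) (auto intro: always_eventually le)
  then have "nprt l = 0" by simp
  then show "l \<in> {x. 0 \<le> x}" by (simp add: zero_le_iff_zero_nprt)
qed



definition hbset :: "('a::real_vector \<Rightarrow> real) \<Rightarrow> ('a \<times> real) set \<Rightarrow> bool" where
  "hbset p F \<longleftrightarrow> (0,0) \<in> F \<and> (\<forall>x a y b. (x,a) \<in> F \<longrightarrow> (y,b) \<in> F \<longrightarrow> (x+y,a+b) \<in> F)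
     \<and> (\<forall>x a c. (x,a) \<in> F \<longrightarrow> (c *\<^sub>R x, c*a) \<in> F) \<and> (\<forall>x a b. (x,a) \<in> F \<longrightarrow> (x,b) \<in> F \<longrightarrow> a = b)
     \<and> (\<forall>x a. (x,a) \<in> F \<longrightarrow> a \<le> p x)"

lemma hb_chain:
  assumes p0: "0 \<le> p 0" and "C \<in> chains {F. hbset p F}"
  shows "\<exists>U\<in>{F. hbset p F}. \<forall>X\<in>C. X \<subseteq> U"
proof (cases "C = {}")
  case True
  have "hbset p {(0,0)}" unfolding hbset_def using p0 by auto
  then show ?thesis using True by (intro bexI[of _ "{(0,0)}"]) auto
next
  case False
  from assms have CA: "\<And>F. F \<in> C \<Longrightarrow> hbset p F" and ch: "\<And>F1 F2. F1 \<in> C \<Longrightarrow> F2 \<in> C \<Longrightarrow> F1 \<subseteq> F2 \<or> F2 \<subseteq> F1"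
    unfolding chains_def chain_subset_def by auto
  have Cadd: "(x+y,a+b) \<in> F" if "F \<in> C" "(x,a) \<in> F" "(y,b) \<in> F" for F x a y b
    using CA[OF that(1)] that(2,3) unfolding hbset_def by blast
  have Cfun: "a = b" if "F \<in> C" "(x,a) \<in> F" "(x,b) \<in> F" for F x a b
    using CA[OF that(1)] that(2,3) unfolding hbset_def by blast
  have "hbset p (\<Union>C)"
    unfolding hbset_def
  proof (intro conjI allI impI)
    show "(0,0) \<in> \<Union>C" using False CA unfolding hbset_def by blast
  next
    fix x a y b assume "(x,a) \<in> \<Union>C" "(y,b) \<in> \<Union>C"
    then obtain F1 F2 where "F1 \<in> C" "F2 \<in> C" "(x,a) \<in> F1" "(y,b) \<in> F2" by auto
    then show "(x+y,a+b) \<in> \<Union>C"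
    proof (cases "F1 \<subseteq> F2")
      case True then show ?thesis using Cadd[of F2 x a y b] \<open>F2 \<in> C\<close> \<open>(x,a) \<in> F1\<close> \<open>(y,b) \<in> F2\<close> by blast
    next
      case False then have "F2 \<subseteq> F1" using ch[of F1 F2] \<open>F1 \<in> C\<close> \<open>F2 \<in> C\<close> by blast
      then show ?thesis using Cadd[of F1 x a y b] \<open>F1 \<in> C\<close> \<open>(x,a) \<in> F1\<close> \<open>(y,b) \<in> F2\<close> by blast
    qed
  next
    fix x a c assume "(x,a) \<in> \<Union>C"
    then show "(c *\<^sub>R x, c*a) \<in> \<Union>C" using CA unfolding hbset_def by blast
  next
    fix x a b assume "(x,a) \<in> \<Union>C" "(x,b) \<in> \<Union>C"
    then obtain F1 F2 where "F1 \<in> C" "F2 \<in> C" "(x,a) \<in> F1" "(x,b) \<in> F2" by auto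
    then show "a = b"
    proof (cases "F1 \<subseteq> F2")
      case True then show ?thesis using Cfun[of F2 x a b] \<open>F2 \<in> C\<close> \<open>(x,a) \<in> F1\<close> \<open>(x,b) \<in> F2\<close> by blast
    next
      case False then have "F2 \<subseteq> F1" using ch[of F1 F2] \<open>F1 \<in> C\<close> \<open>F2 \<in> C\<close> by blast
      then show ?thesis using Cfun[of F1 x a b] \<open>F1 \<in> C\<close> \<open>(x,a) \<in> F1\<close> \<open>(x,b) \<in> F2\<close> by blast
    qed
  next
    fix x a assume "(x,a) \<in> \<Union>C"
    then show "a \<le> p x" using CA unfolding hbset_def by blast
  qed
  then show ?thesis by blast
qed

lemma hb_extend:
  fixes p :: "'a::real_vector \<Rightarrow> real"
  assumes sub: "\<And>x y. p (x + y) \<le> p x + p y" and hom: "\<And>t x. 0 \<le> t \<Longrightarrow> p (t *\<^sub>R x) = t * p x"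
    and H: "hbset p F" and x0: "x0 \<notin> fst ` F"
  shows "\<exists>F'. hbset p F' \<and> F \<subseteq> F' \<and> F' \<noteq> F"
proof -
  from H have F0: "(0,0) \<in> F"
    and Fadd: "\<And>x a y b. (x,a) \<in> F \<Longrightarrow> (y,b) \<in> F \<Longrightarrow> (x+y,a+b) \<in> F"
    and Fsc: "\<And>x a c. (x,a) \<in> F \<Longrightarrow> (c *\<^sub>R x, c*a) \<in> F"
    and Ffun: "\<And>x a b. (x,a) \<in> F \<Longrightarrow> (x,b) \<in> F \<Longrightarrow> a = b"
    and Fp: "\<And>x a. (x,a) \<in> F \<Longrightarrow> a \<le> p x"
    unfolding hbset_def by blast+
  define L where "L = (\<lambda>(x,a). a - p (x - x0)) ` F"
  have key: "a - p (x - x0) \<le> p (y + x0) - b" if "(x,a) \<in> F" "(y,b) \<in> F" for x a y b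
  proof -
    have "a + b \<le> p (x + y)" using Fp[OF Fadd[OF that]] .
    also have "\<dots> = p ((x - x0) + (y + x0))" by (simp add: algebra_simps)
    also have "\<dots> \<le> p (x - x0) + p (y + x0)" by (rule sub)
    finally show ?thesis by simp
  qed
  define c where "c = Sup L"
  have Lne: "L \<noteq> {}" using F0 unfolding L_def by auto
  have Lbdd: "bdd_above L" unfolding L_def bdd_above_def using key F0 by fastforce
  have c1: "a - p (x - x0) \<le> c" if "(x,a) \<in> F" for x a
    unfolding c_def using that Lbdd by (intro cSup_upper) (auto simp: L_def)
  have c2: "c \<le> p (y + x0) - b" if "(y,b) \<in> F" for y b
    unfolding c_def using Lne that key by (intro cSup_least) (auto simp: L_def)
  define F' where "F' = {(x + t *\<^sub>R x0, a + t * c) | x a t. (x,a) \<in> F}"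
  have F'E: "\<And>P. (\<And>x1 a1 t. (x1,a1) \<in> F \<Longrightarrow> x = x1 + t *\<^sub>R x0 \<Longrightarrow> a = a1 + t * c \<Longrightarrow> P) \<Longrightarrow> P"
    if "(x,a) \<in> F'" for x a using that unfolding F'_def by blast
  have F'I: "(x1 + t *\<^sub>R x0, a1 + t * c) \<in> F'" if "(x1,a1) \<in> F" for x1 a1 t
    using that unfolding F'_def by blast
  have "hbset p F'"
    unfolding hbset_def
  proof (intro conjI allI impI)
    show "(0,0) \<in> F'" using F'I[OF F0, of 0] by simp
  next
    fix x a y b assume "(x,a) \<in> F'" "(y,b) \<in> F'"
    then obtain x1 a1 t1 x2 a2 t2 where "(x1,a1) \<in> F" "(x2,a2) \<in> F"
      "x = x1 + t1 *\<^sub>R x0" "a = a1 + t1 * c" "y = x2 + t2 *\<^sub>R x0" "b = a2 + t2 * c"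
      by (metis F'E)
    then show "(x+y,a+b) \<in> F'"
      using F'I[OF Fadd[OF \<open>(x1,a1) \<in> F\<close> \<open>(x2,a2) \<in> F\<close>], of "t1+t2"]
      by (simp add: algebra_simps)
  next
    fix x a r assume "(x,a) \<in> F'"
    then obtain x1 a1 t1 where "(x1,a1) \<in> F" "x = x1 + t1 *\<^sub>R x0" "a = a1 + t1 * c"
      by (metis F'E)
    then show "(r *\<^sub>R x, r*a) \<in> F'"
      using F'I[OF Fsc[OF \<open>(x1,a1) \<in> F\<close>], of r "r*t1"]
      by (simp add: algebra_simps)
  next
    fix x a b assume "(x,a) \<in> F'" "(x,b) \<in> F'"
    then obtain x1 a1 t1 x2 a2 t2 where h: "(x1,a1) \<in> F" "(x2,a2) \<in> F"
      "x = x1 + t1 *\<^sub>R x0" "a = a1 + t1 * c" "x = x2 + t2 *\<^sub>R x0" "b = a2 + t2 * c"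
      by (metis F'E)
    have d: "(x1 - x2, a1 - a2) \<in> F" using Fadd[OF h(1) Fsc[OF h(2), of "-1"]] by simp
    show "a = b"
    proof (cases "t1 = t2")
      case True
      then have "x1 = x2" using h by simp
      then show ?thesis using Ffun[of x1 a1 a2] h True by simp
    next
      case False
      have "x1 - x2 = (t2 - t1) *\<^sub>R x0" using h by (simp add: algebra_simps)
      then have e: "x0 = (1 / (t2 - t1)) *\<^sub>R (x1 - x2)" using False by simp
      have "(x0, (1 / (t2 - t1)) * (a1 - a2)) \<in> F" unfolding e by (rule Fsc[OF d])
      then show ?thesis using x0 by force
    qed
  next
    fix x a assume "(x,a) \<in> F'"
    then obtain x1 a1 t where h: "(x1,a1) \<in> F" "x = x1 + t *\<^sub>R x0" "a = a1 + t * c"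
      by (metis F'E)
    show "a \<le> p x"
    proof (cases "t = 0")
      case True then show ?thesis using h Fp by simp
    next
      case False
      show ?thesis
      proof (cases "t > 0")
        case True
        have m: "((1/t) *\<^sub>R x1, (1/t) * a1) \<in> F" using Fsc[OF h(1)] .
        have "c \<le> p ((1/t) *\<^sub>R x1 + x0) - (1/t) * a1" using c2[OF m] .
        then have "t * c \<le> t * p ((1/t) *\<^sub>R x1 + x0) - a1" using True
          by (simp add: field_simps)
        also have "t * p ((1/t) *\<^sub>R x1 + x0) = p (t *\<^sub>R ((1/t) *\<^sub>R x1 + x0))"
          using hom[of t] True by simp
        also have "t *\<^sub>R ((1/t) *\<^sub>R x1 + x0) = x" using h True by (simp add: algebra_simps)
        finally show ?thesis using h by simp
      next
        case False
        define s where "s = - t"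
        have s: "s > 0" using False \<open>t \<noteq> 0\<close> s_def by simp
        have m: "((1/s) *\<^sub>R x1, (1/s) * a1) \<in> F" using Fsc[OF h(1)] .
        have "(1/s) * a1 - p ((1/s) *\<^sub>R x1 - x0) \<le> c" using c1[OF m] .
        then have "a1 - s * p ((1/s) *\<^sub>R x1 - x0) \<le> s * c" using s
          by (simp add: field_simps)
        also have "s * p ((1/s) *\<^sub>R x1 - x0) = p (s *\<^sub>R ((1/s) *\<^sub>R x1 - x0))"
          using hom[of s] s by simp
        also have "s *\<^sub>R ((1/s) *\<^sub>R x1 - x0) = x" using h s s_def by (simp add: algebra_simps)
        finally show ?thesis using h s_def by simp
      qed
    qed
  qed
  moreover have "F \<subseteq> F'" using F'I[of _ _ 0] by auto
  moreover have "(x0, c) \<in> F'" using F'I[OF F0, of 1] by simp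
  then have "F' \<noteq> F" using x0 by force
  ultimately show ?thesis by blast
qed

lemma hahn_banach_sublinear:
  fixes p :: "'a::real_vector \<Rightarrow> real"
  assumes sub: "\<And>x y. p (x + y) \<le> p x + p y" and hom: "\<And>t x. 0 \<le> t \<Longrightarrow> p (t *\<^sub>R x) = t * p x"
  shows "\<exists>u. linear u \<and> (\<forall>x. u x \<le> p x)"
proof -
  have p0: "0 \<le> p 0" using hom[of 0 0] by simp
  have "\<forall>C\<in>chains {F. hbset p F}. \<exists>U\<in>{F. hbset p F}. \<forall>X\<in>C. X \<subseteq> U"
    using hb_chain[of p, OF p0] by blast
  from Zorn_Lemma2[OF this] obtain F where F: "hbset p F"
    and maxF0: "\<forall>X\<in>{F. hbset p F}. F \<subseteq> X \<longrightarrow> X = F" by blast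
  have maxF: "\<And>X. hbset p X \<Longrightarrow> F \<subseteq> X \<Longrightarrow> X = F" using maxF0 by blast
  have dom: "\<exists>a. (x,a) \<in> F" for x
  proof (rule ccontr)
    assume "\<nexists>a. (x, a) \<in> F"
    then have "x \<notin> fst ` F" by force
    then obtain F' where "hbset p F'" "F \<subseteq> F'" "F' \<noteq> F" using hb_extend[OF sub hom F] by blast
    then show False using maxF by blast
  qed
  from F have Fadd: "\<And>x a y b. (x,a) \<in> F \<Longrightarrow> (y,b) \<in> F \<Longrightarrow> (x+y,a+b) \<in> F"
    and Fsc: "\<And>x a c. (x,a) \<in> F \<Longrightarrow> (c *\<^sub>R x, c*a) \<in> F"
    and Ffun: "\<And>x a b. (x,a) \<in> F \<Longrightarrow> (x,b) \<in> F \<Longrightarrow> a = b"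
    and Fp: "\<And>x a. (x,a) \<in> F \<Longrightarrow> a \<le> p x"
    unfolding hbset_def by blast+
  define u where "u x = (THE a. (x,a) \<in> F)" for x
  have uF: "(x, u x) \<in> F" for x
    unfolding u_def using dom[of x] Ffun by (metis theI)
  have uU: "(x,a) \<in> F \<Longrightarrow> u x = a" for x a using uF Ffun by blast
  have "linear u"
  proof (rule linearI)
    show "u (x + y) = u x + u y" for x y using uU[OF Fadd[OF uF uF]] .
    show "u (c *\<^sub>R x) = c *\<^sub>R u x" for c x using uU[OF Fsc[OF uF]] by simp
  qed
  moreover have "u x \<le> p x" for x using Fp[OF uF] .
  ultimately show ?thesis by blast
qed


lemma dini_weak:
  fixes x :: "nat \<Rightarrow> 'v::banach_lattice"
  assumes pos: "\<And>n. 0 \<le> x n" and dec: "\<And>n. x (Suc n) \<le> x n"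
    and weak: "\<And>u::'v \<Rightarrow> real. bounded_linear u \<Longrightarrow> (\<lambda>n. u (x n)) \<longlonglongrightarrow> 0"
  shows "(\<lambda>n. norm (x n)) \<longlonglongrightarrow> 0"
proof (rule ccontr)
  assume H: "\<not> (\<lambda>n. norm (x n)) \<longlonglongrightarrow> 0"
  have decm: "m \<le> n \<Longrightarrow> x n \<le> x m" for m n
    using lift_Suc_antimono_le[of x, OF dec] by blast
  have ndec: "m \<le> n \<Longrightarrow> norm (x n) \<le> norm (x m)" for m n
    using norm_mono_pos[OF pos decm] by blast
  have "\<exists>\<epsilon>>0. \<forall>m. \<epsilon> \<le> norm (x m)"
  proof (rule ccontr)
    assume "\<not> (\<exists>\<epsilon>>0. \<forall>m. \<epsilon> \<le> norm (x m))"
    then have small: "\<And>r. r > 0 \<Longrightarrow> \<exists>m. norm (x m) < r" by (meson not_le)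
    have "(\<lambda>n. norm (x n)) \<longlonglongrightarrow> 0"
    proof (rule LIMSEQ_I)
      fix r :: real assume "0 < r"
      then obtain m where "norm (x m) < r" using small by blast
      then show "\<exists>N. \<forall>n\<ge>N. norm (norm (x n) - 0) < r"
        using ndec by (intro exI[of _ m]) (auto intro: le_less_trans)
    qed
    then show False using H by blast
  qed
  then obtain \<epsilon> where e: "\<epsilon> > 0" "\<And>m. \<epsilon> \<le> norm (x m)" by blast
  define K where "K = convex hull (range x)"
  have convK: "convex K" unfolding K_def by simp
  have xK: "x n \<in> K" for n unfolding K_def by (rule hull_inc) simp
  have "K \<subseteq> {y. \<exists>m. x m \<le> y}"
    unfolding K_def
  proof (rule hull_minimal)
    show "range x \<subseteq> {y. \<exists>m. x m \<le> y}" by auto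
    show "convex {y. \<exists>m. x m \<le> y}"
      unfolding convex_def
    proof (intro ballI allI impI)
      fix y1 y2 :: 'v and u v :: real
      assume "y1 \<in> {y. \<exists>m. x m \<le> y}" "y2 \<in> {y. \<exists>m. x m \<le> y}" "0 \<le> u" "0 \<le> v" "u + v = 1"
      then obtain m1 m2 where m: "x m1 \<le> y1" "x m2 \<le> y2" by auto
      define m where "m = max m1 m2"
      have "x m \<le> y1" "x m \<le> y2" using m decm[of m1 m] decm[of m2 m] unfolding m_def by auto
      then have "u *\<^sub>R x m + v *\<^sub>R x m \<le> u *\<^sub>R y1 + v *\<^sub>R y2"
        using \<open>0 \<le> u\<close> \<open>0 \<le> v\<close> by (intro add_mono scaleR_left_mono)
      moreover have "u *\<^sub>R x m + v *\<^sub>R x m = x m" using \<open>u + v = 1\<close> by (metis scaleR_add_left scaleR_one)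
      ultimately show "u *\<^sub>R y1 + v *\<^sub>R y2 \<in> {y. \<exists>m. x m \<le> y}" by auto
    qed
  qed
  then have Knorm: "\<epsilon> \<le> norm y" if yK: "y \<in> K" for y
  proof -
    assume "K \<subseteq> {y. \<exists>m. x m \<le> y}"
    then obtain m where "x m \<le> y" using yK by blast
    then have "norm (x m) \<le> norm y" using norm_mono_pos[OF pos] by blast
    then show ?thesis using e(2)[of m] by linarith
  qed
  define S where "S z = {norm (z + s *\<^sub>R y) - s * \<epsilon> | s y. 0 \<le> s \<and> y \<in> K}" for z
  define p where "p z = Inf (S z)" for z
  have Sbdd: "bdd_below (S z)" for z
  proof -
    have "- norm z \<le> norm (z + s *\<^sub>R y) - s * \<epsilon>" if "0 \<le> s" "y \<in> K" for s y
    proof -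
      have "norm (s *\<^sub>R y) \<le> norm (z + s *\<^sub>R y) + norm z"
        by (metis add_diff_cancel_left' norm_triangle_ineq4 add.commute)
      moreover have "s * \<epsilon> \<le> norm (s *\<^sub>R y)" using Knorm[OF that(2)] that(1) by (simp add: mult_left_mono)
      ultimately show ?thesis by linarith
    qed
    then show ?thesis unfolding S_def bdd_below_def by fastforce
  qed
  have Sne: "S z \<noteq> {}" for z unfolding S_def using xK by blast
  have p_le: "p z \<le> norm (z + s *\<^sub>R y) - s * \<epsilon>" if "0 \<le> s" "y \<in> K" for z s y
    unfolding p_def by (rule cInf_lower[OF _ Sbdd]) (use that in \<open>auto simp: S_def\<close>)
  have p_ge: "c \<le> p z" if "\<And>s y. 0 \<le> s \<Longrightarrow> y \<in> K \<Longrightarrow> c \<le> norm (z + s *\<^sub>R y) - s * \<epsilon>" for c z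
    unfolding p_def by (rule cInf_greatest[OF Sne]) (use that in \<open>auto simp: S_def\<close>)
  have core: "p (z1 + z2) \<le> (norm (z1 + s1 *\<^sub>R y1) - s1 * \<epsilon>) + (norm (z2 + s2 *\<^sub>R y2) - s2 * \<epsilon>)"
    if "0 \<le> s1" "y1 \<in> K" "0 \<le> s2" "y2 \<in> K" for z1 z2 s1 y1 s2 y2
  proof (cases "s1 + s2 = 0")
    case True
    then have "s1 = 0" "s2 = 0" using that by auto
    then show ?thesis using p_le[of 0 y1 "z1 + z2", OF _ that(2)] norm_triangle_ineq[of z1 z2] by simp
  next
    case False
    define s where "s = s1 + s2"
    have s: "s > 0" using False that s_def by simp
    define y where "y = (s1 / s) *\<^sub>R y1 + (s2 / s) *\<^sub>R y2"
    have yK: "y \<in> K" unfolding y_def using convK that s s_def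
      by (intro convexD) (auto simp: add_divide_distrib[symmetric])
    have sy: "s *\<^sub>R y = s1 *\<^sub>R y1 + s2 *\<^sub>R y2" unfolding y_def using s by (simp add: scaleR_add_right)
    have "p (z1 + z2) \<le> norm (z1 + z2 + s *\<^sub>R y) - s * \<epsilon>" using p_le[OF _ yK] s by simp
    also have "z1 + z2 + s *\<^sub>R y = (z1 + s1 *\<^sub>R y1) + (z2 + s2 *\<^sub>R y2)" unfolding sy by (simp add: algebra_simps)
    also have "norm \<dots> \<le> norm (z1 + s1 *\<^sub>R y1) + norm (z2 + s2 *\<^sub>R y2)" by (rule norm_triangle_ineq)
    finally show ?thesis unfolding s_def by (simp add: algebra_simps)
  qed
  have sub: "p (z1 + z2) \<le> p z1 + p z2" for z1 z2
  proof -
    have "p (z1 + z2) - p z1 \<le> norm (z2 + s2 *\<^sub>R y2) - s2 * \<epsilon>" if "0 \<le> s2" "y2 \<in> K" for s2 y2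
    proof -
      have "p (z1 + z2) - (norm (z2 + s2 *\<^sub>R y2) - s2 * \<epsilon>) \<le> p z1"
      proof (rule p_ge)
        fix s :: real and y assume "0 \<le> s" "y \<in> K"
        from core[of s y s2 y2 z1 z2] this that show "p (z1 + z2) - (norm (z2 + s2 *\<^sub>R y2) - s2 * \<epsilon>) \<le> norm (z1 + s *\<^sub>R y) - s * \<epsilon>"
          by linarith
      qed
      then show ?thesis by linarith
    qed
    then have "p (z1 + z2) - p z1 \<le> p z2" by (rule p_ge)
    then show ?thesis by linarith
  qed
  have hom: "p (t *\<^sub>R z) = t * p z" if "0 \<le> t" for t z
  proof (cases "t = 0")
    case True
    have "p 0 \<le> 0" using p_le[of 0 "x 0" 0] xK by simp
    moreover have "0 \<le> p 0"
    proof (rule p_ge)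
      fix s :: real and y assume "0 \<le> s" "y \<in> K"
      then show "0 \<le> norm (0 + s *\<^sub>R y) - s * \<epsilon>" using Knorm[of y] by (simp add: mult_left_mono)
    qed
    ultimately show ?thesis using True by simp
  next
    case False
    then have t: "t > 0" using that by simp
    have "p (t *\<^sub>R z) / t \<le> p z"
    proof (rule p_ge)
      fix s :: real and y assume sy: "0 \<le> s" "y \<in> K"
      have "p (t *\<^sub>R z) \<le> norm (t *\<^sub>R z + (t * s) *\<^sub>R y) - (t * s) * \<epsilon>" using p_le[OF _ sy(2)] sy t by simp
      also have "t *\<^sub>R z + (t * s) *\<^sub>R y = t *\<^sub>R (z + s *\<^sub>R y)" by (simp add: algebra_simps)
      also have "norm \<dots> - (t * s) * \<epsilon> = t * (norm (z + s *\<^sub>R y) - s * \<epsilon>)"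
        using t by (simp only: norm_scaleR abs_of_pos) (simp add: algebra_simps)
      finally show "p (t *\<^sub>R z) / t \<le> norm (z + s *\<^sub>R y) - s * \<epsilon>" using t by (simp add: field_simps)
    qed
    moreover have "p z \<le> p (t *\<^sub>R z) / t"
    proof -
      have "t * p z \<le> p (t *\<^sub>R z)"
      proof (rule p_ge)
        fix s :: real and y assume sy: "0 \<le> s" "y \<in> K"
        have "p z \<le> norm (z + (s / t) *\<^sub>R y) - (s / t) * \<epsilon>" using p_le[of "s / t" y z] sy t by simp
        then have "t * p z \<le> t * (norm (z + (s / t) *\<^sub>R y) - (s / t) * \<epsilon>)" using t by simp
        also have "\<dots> = norm (t *\<^sub>R (z + (s / t) *\<^sub>R y)) - s * \<epsilon>"
          using t by (simp only: norm_scaleR abs_of_pos) (simp add: algebra_simps)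
        also have "t *\<^sub>R (z + (s / t) *\<^sub>R y) = t *\<^sub>R z + s *\<^sub>R y" using t by (simp add: algebra_simps)
        finally show "t * p z \<le> norm (t *\<^sub>R z + s *\<^sub>R y) - s * \<epsilon>" .
      qed
      then show ?thesis using t by (simp add: field_simps)
    qed
    ultimately show ?thesis using t by (simp add: field_simps)
  qed
  obtain u where u: "linear u" "\<And>z. u z \<le> p z" using hahn_banach_sublinear[of p, OF sub hom] by blast
  have pn: "p z \<le> norm z" for z using p_le[of 0 "x 0" z] xK by simp
  have "norm (u z) \<le> norm z * 1" for z
  proof -
    have "u z \<le> norm z" using u(2)[of z] pn[of z] by simp
    moreover have "- u z \<le> norm z" using u(2)[of "- z"] pn[of "- z"] linear_neg[OF u(1), of z] by simp
    ultimately show ?thesis by simp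
  qed
  then have bl: "bounded_linear u" using u(1) by (intro bounded_linear_intro[of u 1]) (auto simp: linear_add linear_scale)
  have ge: "\<epsilon> \<le> u (x n)" for n
  proof -
    have "u (- x n) \<le> norm (- x n + 1 *\<^sub>R x n) - 1 * \<epsilon>" using u(2)[of "- x n"] p_le[of 1 "x n" "- x n"] xK by simp
    then show ?thesis using linear_neg[OF u(1), of "x n"] by simp
  qed
  have "\<epsilon> \<le> 0"
    by (rule tendsto_le[OF _ weak[OF bl] tendsto_const]) (auto intro: always_eventually ge)
  then show False using e(1) by simp
qed


definition RS :: "(real \<Rightarrow> 'a::real_vector) \<Rightarrow> real \<Rightarrow> real \<Rightarrow> nat \<Rightarrow> 'a" where
  "RS f a b n = (\<Sum>k<n. ((b - a) / real n) *\<^sub>R f (a + real k * ((b - a) / real n)))"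

lemma int_split:
  fixes f :: "real \<Rightarrow> 'a::banach"
  assumes h: "0 \<le> h" and c: "continuous_on {a..a + real n * h} f"
  shows "integral {a..a + real n * h} f = (\<Sum>k<n. integral {a + real k * h..a + real (Suc k) * h} f)"
  using c
proof (induction n)
  case 0
  then show ?case by simp
next
  case (Suc n)
  have le: "a + real n * h \<le> a + real (Suc n) * h" using h by (simp add: algebra_simps)
  have le0: "a \<le> a + real n * h" using h by simp
  have c': "continuous_on {a..a + real n * h} f"
    using Suc.prems by (rule continuous_on_subset) (use le in auto)
  have "integral {a..a + real n * h} f + integral {a + real n * h..a + real (Suc n) * h} f
      = integral {a..a + real (Suc n) * h} f"
    by (rule Henstock_Kurzweil_Integration.integral_combine[OF le0 le integrable_continuous_real[OF Suc.prems]])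
  then show ?case using Suc.IH[OF c'] by simp
qed

lemma RS_conv:
  fixes f :: "real \<Rightarrow> 'a::banach"
  assumes ab: "a \<le> b" and c: "continuous_on {a..b} f"
  shows "RS f a b \<longlonglongrightarrow> integral {a..b} f"
proof (cases "a = b")
  case True
  then have "RS f a b = (\<lambda>n. 0)" by (auto simp: RS_def fun_eq_iff)
  then show ?thesis using True by simp
next
  case False
  then have ab': "a < b" using ab by simp
  show ?thesis
  proof (rule LIMSEQ_I)
    fix r :: real assume r: "0 < r"
    define e where "e = r / (2 * (b - a))"
    have e: "e > 0" using r ab' by (simp add: e_def)
    have "uniformly_continuous_on {a..b} f" by (rule compact_uniformly_continuous[OF c compact_Icc])
    then obtain d where d: "d > 0" and dd: "\<And>x x'. x \<in> {a..b} \<Longrightarrow> x' \<in> {a..b} \<Longrightarrow> dist x' x < d \<Longrightarrow> dist (f x') (f x) < e"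
      unfolding uniformly_continuous_on_def using e by metis
    obtain N :: nat where N: "(b - a) / d < real N" using reals_Archimedean2 by blast
    have "norm (RS f a b n - integral {a..b} f) < r" if n: "n \<ge> Suc N" for n
    proof -
      define h where "h = (b - a) / real n"
      have npos: "real n > 0" using n by simp
      have h0: "0 < h" unfolding h_def using npos ab' by simp
      have hd: "h < d"
      proof -
        have "(b - a) / d < real n" using N n by linarith
        then have "b - a < real n * d" using d by (simp add: field_simps)
        then show ?thesis unfolding h_def using npos by (simp add: field_simps)
      qed
      have bn: "a + real n * h = b" unfolding h_def using npos by simp
      have split: "integral {a..b} f = (\<Sum>k<n. integral {a + real k * h..a + real (Suc k) * h} f)"
        using int_split[of h a n f] h0 c bn by simp
      have RSe: "RS f a b n = (\<Sum>k<n. h *\<^sub>R f (a + real k * h))"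
        unfolding RS_def h_def by simp
      have tm: "norm (integral {a + real k * h..a + real (Suc k) * h} f - h *\<^sub>R f (a + real k * h)) \<le> e * h"
        if k: "k < n" for k
      proof -
        define t0 where "t0 = a + real k * h"
        have t1: "a + real (Suc k) * h = t0 + h" unfolding t0_def by (simp add: algebra_simps)
        have sub: "{t0..t0 + h} \<subseteq> {a..b}"
        proof -
          have "a \<le> t0" unfolding t0_def using h0 by simp
          moreover have "t0 + h \<le> b"
          proof -
            have "real (Suc k) \<le> real n" using k by simp
            then have "real (Suc k) * h \<le> real n * h" using h0 by (intro mult_right_mono) auto
            then show ?thesis using bn t1 by linarith
          qed
          ultimately show ?thesis by auto
        qed
        have t0ab: "t0 \<in> {a..b}" using sub h0 by auto
        have cs: "continuous_on {t0..t0 + h} f" using continuous_on_subset[OF c sub] .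
        have "integral {t0..t0 + h} f - h *\<^sub>R f t0 = integral {t0..t0 + h} (\<lambda>t. f t - f t0)"
          using Henstock_Kurzweil_Integration.integral_diff[OF integrable_continuous_real[OF cs] integrable_const_ivl, of "f t0"] h0
          by simp
        also have "norm \<dots> \<le> e * (t0 + h - t0)"
        proof (rule integral_bound)
          show "t0 \<le> t0 + h" using h0 by simp
          show "continuous_on {t0..t0 + h} (\<lambda>t. f t - f t0)" by (intro continuous_intros cs)
          fix t assume t: "t \<in> {t0..t0 + h}"
          have "dist t t0 < d" using t hd by (auto simp: dist_real_def)
          then have "dist (f t) (f t0) < e" using dd[OF t0ab] t sub by blast
          then show "norm (f t - f t0) \<le> e" by (simp add: dist_norm)
        qed
        finally show ?thesis using t1 unfolding t0_def by (simp add: add.assoc)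
      qed
      have "norm (RS f a b n - integral {a..b} f) = norm (\<Sum>k<n. integral {a + real k * h..a + real (Suc k) * h} f - h *\<^sub>R f (a + real k * h))"
        unfolding RSe split by (simp add: sum_subtractf norm_minus_commute)
      also have "\<dots> \<le> (\<Sum>k<n. norm (integral {a + real k * h..a + real (Suc k) * h} f - h *\<^sub>R f (a + real k * h)))"
        by (rule norm_sum)
      also have "\<dots> \<le> (\<Sum>k<n. e * h)" by (rule sum_mono) (use tm in auto)
      also have "\<dots> = e * (real n * h)" by simp
      also have "\<dots> = e * (b - a)" using bn by (metis add_diff_cancel_left')
      also have "\<dots> < r" using r ab' unfolding e_def by (simp add: field_simps)
      finally show ?thesis .
    qed
    then show "\<exists>no. \<forall>n\<ge>no. norm (RS f a b n - integral {a..b} f) < r" by blast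
  qed
qed

lemma RS_closed:
  fixes f :: "real \<Rightarrow> 'a::banach"
  assumes ab: "a \<le> b" and c: "continuous_on {a..b} f" and S: "closed S"
    and inS: "\<And>n. RS f a b n \<in> S"
  shows "integral {a..b} f \<in> S"
  using closed_sequentially[OF S inS RS_conv[OF ab c]] .

lemma integral_nonneg_bl:
  fixes f :: "real \<Rightarrow> 'a::banach_lattice"
  assumes ab: "a \<le> b" and c: "continuous_on {a..b} f" and pos: "\<And>t. t \<in> {a..b} \<Longrightarrow> 0 \<le> f t"
  shows "0 \<le> integral {a..b} f"
proof -
  have "RS f a b n \<in> {x. 0 \<le> x}" for n
  proof -
    have "0 \<le> ((b - a) / real n) *\<^sub>R f (a + real k * ((b - a) / real n))" if "k < n" for k
    proof (rule scaleR_nonneg_nonneg)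
      show "0 \<le> (b - a) / real n" using ab by simp
      have "real k / real n \<le> 1" using that by simp
      then have "(real k / real n) * (b - a) \<le> 1 * (b - a)" using ab by (intro mult_right_mono) auto
      then have "real k * ((b - a) / real n) \<le> b - a" by (simp add: times_divide_eq_right mult.commute)
      then show "0 \<le> f (a + real k * ((b - a) / real n))" using ab by (intro pos) auto
    qed
    then show ?thesis unfolding RS_def by (auto intro: sum_nonneg)
  qed
  then show ?thesis using RS_closed[OF ab c closed_nonneg] by blast
qed


lemma int_avg:
  fixes f :: "real \<Rightarrow> 'a::banach"
  assumes c: "continuous_on {a..a+1} f"
  shows "((\<lambda>s. (1/s) *\<^sub>R integral {a..a+s} f) \<longlongrightarrow> f a) (at_right 0)"
proof (rule tendstoI)
  fix e :: real assume e: "e > 0"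
  have "continuous (at a within {a..a+1}) f" using c by (simp add: continuous_on_eq_continuous_within)
  then obtain d where d: "d > 0" and dd: "\<And>t. t \<in> {a..a+1} \<Longrightarrow> dist t a < d \<Longrightarrow> dist (f t) (f a) < e/2"
    unfolding continuous_within_eps_delta using e by (metis half_gt_zero)
  show "\<forall>\<^sub>F s in at_right 0. dist ((1/s) *\<^sub>R integral {a..a+s} f) (f a) < e"
    unfolding eventually_at_right_field
  proof (intro exI[of _ "min d 1"] conjI allI impI)
    show "min d 1 > 0" using d by simp
    fix s :: real assume s: "s > 0" "s < min d 1"
    have sub: "{a..a+s} \<subseteq> {a..a+1}" using s by auto
    have cs: "continuous_on {a..a+s} f" using continuous_on_subset[OF c sub] .
    have "integral {a..a+s} f - s *\<^sub>R f a = integral {a..a+s} (\<lambda>t. f t - f a)"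
      using Henstock_Kurzweil_Integration.integral_diff[OF integrable_continuous_real[OF cs] integrable_const_ivl, of "f a"] s
      by simp
    also have "norm \<dots> \<le> (e/2) * (a + s - a)"
    proof (rule integral_bound)
      show "a \<le> a + s" using s by simp
      show "continuous_on {a..a + s} (\<lambda>t. f t - f a)" by (intro continuous_intros cs)
      fix t assume t: "t \<in> {a..a + s}"
      have "dist t a < d" using t s by (auto simp: dist_real_def)
      then have "dist (f t) (f a) < e/2" using dd t sub by blast
      then show "norm (f t - f a) \<le> e/2" by (simp add: dist_norm)
    qed
    finally have "norm (integral {a..a+s} f - s *\<^sub>R f a) \<le> (e/2) * s" by simp
    then have "(1/s) * norm (integral {a..a+s} f - s *\<^sub>R f a) \<le> (1/s) * ((e/2) * s)"
      using s by (intro mult_left_mono) auto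
    then have "norm ((1/s) *\<^sub>R (integral {a..a+s} f - s *\<^sub>R f a)) \<le> e/2"
      using s by simp
    moreover have "(1/s) *\<^sub>R (integral {a..a+s} f - s *\<^sub>R f a) = (1/s) *\<^sub>R integral {a..a+s} f - f a"
      using s by (simp add: algebra_simps)
    ultimately show "dist ((1/s) *\<^sub>R integral {a..a+s} f) (f a) < e"
      using e by (simp add: dist_norm)
  qed
qed

lemma exp_quot_lim: "((\<lambda>s. (exp (l * s) - 1) / s) \<longlongrightarrow> (l::real)) (at_right 0)"
proof -
  have "((\<lambda>s. exp (l * s)) has_field_derivative exp (l * 0) * l) (at 0)"
    by (auto intro!: derivative_eq_intros)
  then have "((\<lambda>y. (exp (l * y) - exp (l * 0)) / (y - 0)) \<longlongrightarrow> exp (l * 0) * l) (at 0)"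
    by (rule has_field_derivative_iff[THEN iffD1])
  then have "((\<lambda>s. (exp (l * s) - 1) / s) \<longlongrightarrow> l) (at 0)" by simp
  then show ?thesis by (rule tendsto_mono[rotated]) (simp add: at_within_le_at)
qed

lemma exp_neg_at_top: "(k::real) < 0 \<Longrightarrow> ((\<lambda>b. exp (k * b)) \<longlongrightarrow> 0) at_top"
  by (rule filterlim_compose[OF exp_at_bot filterlim_tendsto_neg_mult_at_bot[OF tendsto_const _ filterlim_ident]])

locale sg =
  fixes At :: "'x::banach_lattice \<Rightarrow> 'x" and Dt :: "'x set" and G :: "'x \<Rightarrow> 'v::banach_lattice"
    and T :: "real \<Rightarrow> 'x \<Rightarrow> 'x" and M \<omega> :: real
  assumes op: "closed_dense_operator Dt At"
    and G_bdd: "graph_bounded Dt At G"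
    and gen: "generates {x \<in> Dt. G x = 0} At T"
    and T_pos: "\<forall>t\<ge>0. \<forall>x. 0 \<le> x \<longrightarrow> 0 \<le> T t x"
    and M1: "1 \<le> M" and om0: "0 \<le> \<omega>"
    and expb: "\<And>t x. 0 \<le> t \<Longrightarrow> norm (T t x) \<le> M * exp (\<omega> * t) * norm x"
begin

abbreviation "DA \<equiv> {x \<in> Dt. G x = 0}"

lemma Dt_sub: "subspace Dt" using op unfolding closed_dense_operator_def linear_on_sub_def by blast
lemma At_add: "x \<in> Dt \<Longrightarrow> y \<in> Dt \<Longrightarrow> At (x + y) = At x + At y"
  using op unfolding closed_dense_operator_def linear_on_sub_def by blast
lemma At_scale: "x \<in> Dt \<Longrightarrow> At (c *\<^sub>R x) = c *\<^sub>R At x"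
  using op unfolding closed_dense_operator_def linear_on_sub_def by blast
lemma At_diff: "x \<in> Dt \<Longrightarrow> y \<in> Dt \<Longrightarrow> At (x - y) = At x - At y"
proof -
  assume "x \<in> Dt" "y \<in> Dt"
  then have "At (x + (-1) *\<^sub>R y) = At x + (-1) *\<^sub>R At y" using At_add At_scale Dt_sub subspace_mul by metis
  then show ?thesis by simp
qed
lemma G_add: "x \<in> Dt \<Longrightarrow> y \<in> Dt \<Longrightarrow> G (x + y) = G x + G y"
  using G_bdd unfolding graph_bounded_def linear_on_sub_def by blast
lemma G_scale: "x \<in> Dt \<Longrightarrow> G (c *\<^sub>R x) = c *\<^sub>R G x"
  using G_bdd unfolding graph_bounded_def linear_on_sub_def by blast
lemma G_diff: "x \<in> Dt \<Longrightarrow> y \<in> Dt \<Longrightarrow> G (x - y) = G x - G y"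
proof -
  assume "x \<in> Dt" "y \<in> Dt"
  then have "G (x + (-1) *\<^sub>R y) = G x + (-1) *\<^sub>R G y" using G_add G_scale Dt_sub subspace_mul by metis
  then show ?thesis by simp
qed
lemma Dt_add: "x \<in> Dt \<Longrightarrow> y \<in> Dt \<Longrightarrow> x + y \<in> Dt" using Dt_sub subspace_add by blast
lemma Dt_scale: "x \<in> Dt \<Longrightarrow> c *\<^sub>R x \<in> Dt" using Dt_sub subspace_mul by blast
lemma Dt_diff: "x \<in> Dt \<Longrightarrow> y \<in> Dt \<Longrightarrow> x - y \<in> Dt" using Dt_sub subspace_diff by blast
lemma DA_add: "x \<in> DA \<Longrightarrow> y \<in> DA \<Longrightarrow> x + y \<in> DA" using Dt_add G_add by auto
lemma DA_scale: "x \<in> DA \<Longrightarrow> c *\<^sub>R x \<in> DA" using Dt_scale G_scale by auto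
lemma DA_diff: "x \<in> DA \<Longrightarrow> y \<in> DA \<Longrightarrow> x - y \<in> DA" using Dt_diff G_diff by auto

lemma T_bl: "0 \<le> t \<Longrightarrow> bounded_linear (T t)"
  using gen unfolding generates_def C0_semigroup_def by blast
lemma T0: "T 0 x = x"
  using gen unfolding generates_def C0_semigroup_def by auto
lemma T_add: "0 \<le> s \<Longrightarrow> 0 \<le> t \<Longrightarrow> T (s + t) x = T s (T t x)"
  using gen unfolding generates_def C0_semigroup_def by auto
lemma T_right0: "((\<lambda>t. T t x) \<longlongrightarrow> x) (at_right 0)"
  using gen unfolding generates_def C0_semigroup_def by auto
lemma T_lin_diff: "0 \<le> t \<Longrightarrow> T t (x - y) = T t x - T t y"
  using linear_diff[OF bounded_linear.linear[OF T_bl]] by blast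
lemma T_lin_add: "0 \<le> t \<Longrightarrow> T t (x + y) = T t x + T t y"
  using linear_add[OF bounded_linear.linear[OF T_bl]] by blast
lemma T_lin_scale: "0 \<le> t \<Longrightarrow> T t (c *\<^sub>R x) = c *\<^sub>R T t x"
  using linear_scale[OF bounded_linear.linear[OF T_bl]] by blast
lemma T_comm: "0 \<le> s \<Longrightarrow> 0 \<le> t \<Longrightarrow> T s (T t x) = T t (T s x)"
  by (metis T_add add.commute)
lemma gen_lim: "x \<in> DA \<Longrightarrow> ((\<lambda>h. (1 / h) *\<^sub>R (T h x - x)) \<longlongrightarrow> At x) (at_right 0)"
  using gen unfolding generates_def by blast
lemma gen_intro:
  assumes "((\<lambda>h. (1 / h) *\<^sub>R (T h z - z)) \<longlongrightarrow> w) (at_right 0)"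
  shows "z \<in> DA" "At z = w"
proof -
  have DAe: "DA = {x. \<exists>y. ((\<lambda>h. (1 / h) *\<^sub>R (T h x - x)) \<longlongrightarrow> y) (at_right 0)}"
    using gen unfolding generates_def by blast
  show "z \<in> DA" using assms by (subst DAe) blast
  then show "At z = w" using gen_lim tendsto_unique[OF trivial_limit_at_right_real] assms by blast
qed

lemma T_diff_bound:
  assumes "0 \<le> s" "0 \<le> h"
  shows "norm (T (s + h) y - T s y) \<le> M * exp (\<omega> * s) * norm (T h y - y)"
proof -
  have "T (s + h) y - T s y = T s (T h y - y)" using assms T_add T_lin_diff by simp
  then show ?thesis using expb[OF assms(1)] by simp
qed

lemma T_cont: "continuous_on {0..} (\<lambda>t. T t y)"
  unfolding continuous_on_iff
proof (intro ballI allI impI)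
  fix t0 :: real and e :: real assume t0: "t0 \<in> {0..}" and e: "0 < e"
  define K where "K = M * exp (\<omega> * (t0 + 1))"
  have K: "K > 0" unfolding K_def using M1 by simp
  have "\<forall>\<^sub>F h in at_right 0. dist (T h y) y < e / K" using tendstoD[OF T_right0] e K by simp
  then obtain d where d: "d > 0" and dd: "\<And>h. h > 0 \<Longrightarrow> h < d \<Longrightarrow> dist (T h y) y < e / K"
    unfolding eventually_at_right_field by auto
  have key: "norm (T h y - y) < e / K" if "0 \<le> h" "h < d" for h
  proof (cases "h = 0")
    case True then show ?thesis using e K by (simp add: T0)
  next
    case False then show ?thesis using dd[of h] that by (simp add: dist_norm)
  qed
  show "\<exists>d>0. \<forall>x'\<in>{0..}. dist x' t0 < d \<longrightarrow> dist (T x' y) (T t0 y) < e"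
  proof (intro exI[of _ "min d 1"] conjI ballI impI)
    show "min d 1 > 0" using d by simp
    fix t assume t: "t \<in> {0::real..}" "dist t t0 < min d 1"
    have le: "M * exp (\<omega> * s) \<le> K" if "s \<le> t0 + 1" for s
      unfolding K_def using om0 that M1 by (intro mult_left_mono) (auto intro: mult_left_mono)
    show "dist (T t y) (T t0 y) < e"
    proof (cases "t0 \<le> t")
      case True
      define h where "h = t - t0"
      have h: "0 \<le> h" "h < d" using True t unfolding h_def by (auto simp: dist_real_def)
      have "norm (T (t0 + h) y - T t0 y) \<le> M * exp (\<omega> * t0) * norm (T h y - y)"
        using T_diff_bound t0 h by auto
      also have "\<dots> \<le> K * norm (T h y - y)" using le[of t0] by (intro mult_right_mono) auto
      also have "\<dots> < K * (e / K)" by (rule mult_strict_left_mono[OF key[OF h] K])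
      also have "\<dots> = e" using K by simp
      finally show ?thesis unfolding h_def by (simp add: dist_norm)
    next
      case False
      define h where "h = t0 - t"
      have h: "0 \<le> h" "h < d" using False t unfolding h_def by (auto simp: dist_real_def)
      have "norm (T (t + h) y - T t y) \<le> M * exp (\<omega> * t) * norm (T h y - y)"
        using T_diff_bound t h by auto
      also have "\<dots> \<le> K * norm (T h y - y)" using le[of t] False by (intro mult_right_mono) auto
      also have "\<dots> < K * (e / K)" by (rule mult_strict_left_mono[OF key[OF h] K])
      also have "\<dots> = e" using K by simp
      finally show ?thesis unfolding h_def by (simp add: dist_norm norm_minus_commute)
    qed
  qed
qed

lemma T_cont_on: "S \<subseteq> {0..} \<Longrightarrow> continuous_on S (\<lambda>t. T t y)"
  using continuous_on_subset[OF T_cont] by blast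

lemma T_DA:
  assumes x: "x \<in> DA" and t: "0 \<le> t"
  shows "T t x \<in> DA" "At (T t x) = T t (At x)"
proof -
  have "((\<lambda>h. T t ((1 / h) *\<^sub>R (T h x - x))) \<longlongrightarrow> T t (At x)) (at_right 0)"
    by (rule bounded_linear.tendsto[OF T_bl[OF t] gen_lim[OF x]])
  moreover have "\<forall>\<^sub>F h in at_right 0. T t ((1 / h) *\<^sub>R (T h x - x)) = (1 / h) *\<^sub>R (T h (T t x) - T t x)"
    using eventually_at_right_less[of 0]
  proof (rule eventually_mono)
    fix h :: real assume h: "0 < h"
    have "T h (T t x) = T t (T h x)" using T_comm h t by simp
    then show "T t ((1 / h) *\<^sub>R (T h x - x)) = (1 / h) *\<^sub>R (T h (T t x) - T t x)"
      using t T_lin_scale T_lin_diff by simp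
  qed
  ultimately have "((\<lambda>h. (1 / h) *\<^sub>R (T h (T t x) - T t x)) \<longlongrightarrow> T t (At x)) (at_right 0)"
    by (rule Lim_transform_eventually)
  then show "T t x \<in> DA" "At (T t x) = T t (At x)" using gen_intro by blast+
qed

lemma T_nonneg: "0 \<le> t \<Longrightarrow> 0 \<le> x \<Longrightarrow> 0 \<le> T t x" using T_pos by blast

end


lemma exp_int:
  fixes k b c :: real
  assumes k: "k \<noteq> 0" and bc: "b \<le> c"
  shows "integral {b..c} (\<lambda>t. exp (k * t)) = (exp (k * c) - exp (k * b)) / k"
proof -
  have "((\<lambda>t. exp (k * t)) has_integral ((\<lambda>t. exp (k * t) / k) c - (\<lambda>t. exp (k * t) / k) b)) {b..c}"
  proof (rule fundamental_theorem_of_calculus[OF bc])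
    fix x assume "x \<in> {b..c}"
    have "((\<lambda>t. exp (k * t) / k) has_real_derivative exp (k * x)) (at x within {b..c})"
      using k by (auto intro!: derivative_eq_intros)
    then show "((\<lambda>t. exp (k * t) / k) has_vector_derivative exp (k * x)) (at x within {b..c})"
      by (simp add: has_real_derivative_iff_has_vector_derivative)
  qed
  then show ?thesis by (simp add: integral_unique diff_divide_distrib)
qed

context sg
begin

definition Fi :: "real \<Rightarrow> real \<Rightarrow> 'x \<Rightarrow> 'x" where
  "Fi l b y = integral {0..b} (\<lambda>t. exp (- l * t) *\<^sub>R T t y)"

lemma g_cont: "S \<subseteq> {0..} \<Longrightarrow> continuous_on S (\<lambda>t. exp (- l * t) *\<^sub>R T t y)"
  by (intro continuous_intros T_cont_on)

lemma g_int: "0 \<le> a \<Longrightarrow> (\<lambda>t. exp (- l * t) *\<^sub>R T t y) integrable_on {a..b}"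
  by (rule integrable_continuous_real[OF g_cont]) auto

lemma Fi_0[simp]: "Fi l 0 y = 0" by (simp add: Fi_def)

lemma Fi_split: "0 \<le> b \<Longrightarrow> b \<le> c \<Longrightarrow> Fi l c y - Fi l b y = integral {b..c} (\<lambda>t. exp (- l * t) *\<^sub>R T t y)"
  unfolding Fi_def
  using Henstock_Kurzweil_Integration.integral_combine[of 0 b c "\<lambda>t. exp (- l * t) *\<^sub>R T t y", OF _ _ g_int]
  by (simp add: algebra_simps)

lemma Fi_split': "0 \<le> b \<Longrightarrow> b \<le> c \<Longrightarrow> Fi l c y = Fi l b y + integral {b..c} (\<lambda>t. exp (- l * t) *\<^sub>R T t y)"
  using Fi_split by (metis add.commute diff_add_cancel)

lemma Fi_add: "Fi l b (y + z) = Fi l b y + Fi l b z"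
proof -
  have "Fi l b (y + z) = integral {0..b} (\<lambda>t. exp (- l * t) *\<^sub>R T t y + exp (- l * t) *\<^sub>R T t z)"
    unfolding Fi_def by (rule integral_cong) (auto simp: T_lin_add scaleR_add_right)
  also have "\<dots> = Fi l b y + Fi l b z"
    unfolding Fi_def by (rule Henstock_Kurzweil_Integration.integral_add[OF g_int g_int]) auto
  finally show ?thesis .
qed

lemma Fi_scale: "Fi l b (c *\<^sub>R y) = c *\<^sub>R Fi l b y"
proof -
  have "Fi l b (c *\<^sub>R y) = integral {0..b} (\<lambda>t. c *\<^sub>R (exp (- l * t) *\<^sub>R T t y))"
    unfolding Fi_def by (rule integral_cong) (auto simp: T_lin_scale)
  then show ?thesis unfolding Fi_def by (simp only: integral_cmul)
qed

lemma Fi_linear: "linear (Fi l b)"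
  by (rule linearI) (auto simp: Fi_add Fi_scale)

lemma Fi_diff: "Fi l b (y - z) = Fi l b y - Fi l b z"
  using linear_diff[OF Fi_linear] by blast

lemma Fi_bound:
  assumes l: "l > \<omega>" and b: "0 \<le> b" "b \<le> c"
  shows "norm (Fi l c y - Fi l b y) \<le> M * norm y * exp ((\<omega> - l) * b) / (l - \<omega>)"
proof -
  have "norm (Fi l c y - Fi l b y) = norm (integral {b..c} (\<lambda>t. exp (- l * t) *\<^sub>R T t y))"
    using Fi_split b by simp
  also have "\<dots> \<le> integral {b..c} (\<lambda>t. (M * norm y) * exp ((\<omega> - l) * t))"
  proof (rule integral_norm_bound_integral)
    show "(\<lambda>t. exp (- l * t) *\<^sub>R T t y) integrable_on {b..c}" using g_int b by simp
    show "(\<lambda>t. (M * norm y) * exp ((\<omega> - l) * t)) integrable_on {b..c}"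
      by (intro integrable_continuous_real continuous_intros)
    fix t assume t: "t \<in> {b..c}"
    then have t0: "0 \<le> t" using b by simp
    have "norm (exp (- l * t) *\<^sub>R T t y) = exp (- l * t) * norm (T t y)" by simp
    also have "\<dots> \<le> exp (- l * t) * (M * exp (\<omega> * t) * norm y)" using expb[OF t0] by (intro mult_left_mono) auto
    also have "\<dots> = (M * norm y) * exp ((\<omega> - l) * t)" by (simp add: algebra_simps exp_add[symmetric])
    finally show "norm (exp (- l * t) *\<^sub>R T t y) \<le> (M * norm y) * exp ((\<omega> - l) * t)" .
  qed
  also have "\<dots> = (M * norm y) * ((exp ((\<omega> - l) * c) - exp ((\<omega> - l) * b)) / (\<omega> - l))"
    using exp_int[of "\<omega> - l" b c] l b by simp
  also have "\<dots> \<le> (M * norm y) * (exp ((\<omega> - l) * b) / (l - \<omega>))"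
  proof (rule mult_left_mono)
    have "(exp ((\<omega> - l) * c) - exp ((\<omega> - l) * b)) / (\<omega> - l) = (exp ((\<omega> - l) * b) - exp ((\<omega> - l) * c)) / (l - \<omega>)"
      using l by (simp add: field_simps)
    also have "\<dots> \<le> exp ((\<omega> - l) * b) / (l - \<omega>)" using l by (intro divide_right_mono) auto
    finally show "(exp ((\<omega> - l) * c) - exp ((\<omega> - l) * b)) / (\<omega> - l) \<le> exp ((\<omega> - l) * b) / (l - \<omega>)" .
    show "0 \<le> M * norm y" using M1 by simp
  qed
  finally show ?thesis by simp
qed

lemma Fi_norm: "l > \<omega> \<Longrightarrow> 0 \<le> b \<Longrightarrow> norm (Fi l b y) \<le> M * norm y / (l - \<omega>)"
  using Fi_bound[of l 0 b y] by simp

lemma Fi_bl: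
  assumes l: "l > \<omega>" and b: "0 \<le> b"
  shows "bounded_linear (Fi l b)"
proof (rule bounded_linear_intro[of _ "M / (l - \<omega>)"])
  show "Fi l b (x + y) = Fi l b x + Fi l b y" for x y by (rule Fi_add)
  show "Fi l b (r *\<^sub>R x) = r *\<^sub>R Fi l b x" for r x by (rule Fi_scale)
  fix x :: 'x
  have "M * norm x / (l - \<omega>) = norm x * (M / (l - \<omega>))" by simp
  then show "norm (Fi l b x) \<le> norm x * (M / (l - \<omega>))" using Fi_norm[OF l b, of x] by linarith
qed

lemma Fi_cauchy:
  assumes l: "l > \<omega>"
  shows "convergent (\<lambda>n. Fi l (real n) y)"
proof -
  define C where "C = M * norm y / (l - \<omega>)"
  have C: "C \<ge> 0" unfolding C_def using l M1 by simp
  have q: "exp (\<omega> - l) < 1" "0 < exp (\<omega> - l)" using l by auto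
  have "Cauchy (\<lambda>n. Fi l (real n) y)"
  proof (rule CauchyI)
    fix e :: real assume e: "0 < e"
    have "(\<lambda>n. C * exp (\<omega> - l) ^ n) \<longlonglongrightarrow> C * 0"
      by (intro tendsto_mult tendsto_const LIMSEQ_power_zero) (use q in auto)
    then obtain N where N: "\<And>n. n \<ge> N \<Longrightarrow> norm (C * exp (\<omega> - l) ^ n - 0) < e"
      using e by (auto simp: LIMSEQ_def dist_norm)
    have bnd: "norm (Fi l (real m) y - Fi l (real n) y) \<le> C * exp (\<omega> - l) ^ n" if "n \<le> m" for m n
    proof -
      have "norm (Fi l (real m) y - Fi l (real n) y) \<le> M * norm y * exp ((\<omega> - l) * real n) / (l - \<omega>)"
        using Fi_bound[OF l, of "real n" "real m" y] that by simp
      also have "exp ((\<omega> - l) * real n) = exp (\<omega> - l) ^ n" by (metis exp_of_nat_mult mult.commute)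
      finally show ?thesis unfolding C_def by (simp add: field_simps)
    qed
    have pw: "exp (\<omega> - l) ^ n \<le> exp (\<omega> - l) ^ N" if "n \<ge> N" for n
      using q that by (intro power_decreasing) auto
    show "\<exists>N. \<forall>m\<ge>N. \<forall>n\<ge>N. norm (Fi l (real m) y - Fi l (real n) y) < e"
    proof (intro exI[of _ N] allI impI)
      fix m n assume mn: "m \<ge> N" "n \<ge> N"
      have NN: "C * exp (\<omega> - l) ^ N < e" using N[of N] C q by simp
      show "norm (Fi l (real m) y - Fi l (real n) y) < e"
      proof (cases "n \<le> m")
        case True
        have "norm (Fi l (real m) y - Fi l (real n) y) \<le> C * exp (\<omega> - l) ^ n" using bnd True by blast
        also have "\<dots> \<le> C * exp (\<omega> - l) ^ N" using pw[OF mn(2)] C by (intro mult_left_mono) auto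
        finally show ?thesis using NN by simp
      next
        case False
        have "norm (Fi l (real n) y - Fi l (real m) y) \<le> C * exp (\<omega> - l) ^ m" using bnd False by simp
        also have "\<dots> \<le> C * exp (\<omega> - l) ^ N" using pw[OF mn(1)] C by (intro mult_left_mono) auto
        finally show ?thesis using NN by (simp add: norm_minus_commute)
      qed
    qed
  qed
  then show ?thesis by (simp add: Cauchy_convergent_iff)
qed

definition Rs :: "real \<Rightarrow> 'x \<Rightarrow> 'x" where
  "Rs l y = lim (\<lambda>n. Fi l (real n) y)"

lemma Rs_seq: "l > \<omega> \<Longrightarrow> (\<lambda>n. Fi l (real n) y) \<longlonglongrightarrow> Rs l y"
  unfolding Rs_def using Fi_cauchy convergent_LIMSEQ_iff by blast

lemma Rs_tail:
  assumes l: "l > \<omega>" and b: "0 \<le> b"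
  shows "norm (Rs l y - Fi l b y) \<le> M * norm y * exp ((\<omega> - l) * b) / (l - \<omega>)"
proof -
  have "(\<lambda>n. norm (Fi l (real n) y - Fi l b y)) \<longlonglongrightarrow> norm (Rs l y - Fi l b y)"
    by (intro tendsto_norm tendsto_diff Rs_seq l tendsto_const)
  moreover have "\<forall>\<^sub>F n in sequentially. norm (Fi l (real n) y - Fi l b y) \<le> M * norm y * exp ((\<omega> - l) * b) / (l - \<omega>)"
  proof -
    obtain N :: nat where "b \<le> real N" using real_arch_simple by blast
    then show ?thesis unfolding eventually_sequentially
      by (intro exI[of _ N] allI impI Fi_bound[OF l b]) auto
  qed
  ultimately show ?thesis by (rule tendsto_le[OF trivial_limit_sequentially tendsto_const])
qed

lemma Rs_norm: "l > \<omega> \<Longrightarrow> norm (Rs l y) \<le> M * norm y / (l - \<omega>)"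
  using Rs_tail[of l 0 y] by simp

lemma Rs_tendsto:
  assumes l: "l > \<omega>"
  shows "((\<lambda>b. Fi l b y) \<longlongrightarrow> Rs l y) at_top"
proof -
  have "((\<lambda>b. M * norm y * exp ((\<omega> - l) * b) / (l - \<omega>)) \<longlongrightarrow> M * norm y * 0 / (l - \<omega>)) at_top"
    by (intro tendsto_intros exp_neg_at_top) (use l in auto)
  then have lim0: "((\<lambda>b. M * norm y * exp ((\<omega> - l) * b) / (l - \<omega>)) \<longlongrightarrow> 0) at_top" by simp
  have ev: "\<forall>\<^sub>F b in at_top. norm (Fi l b y - Rs l y) \<le> M * norm y * exp ((\<omega> - l) * b) / (l - \<omega>)"
    using eventually_ge_at_top[of 0] by eventually_elim (use Rs_tail[OF l] in \<open>simp add: norm_minus_commute\<close>)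
  have "((\<lambda>b. Fi l b y - Rs l y) \<longlongrightarrow> 0) at_top" by (rule Lim_null_comparison[OF ev lim0])
  then show ?thesis by (rule LIM_zero_cancel)
qed

end


lemma vec_id1:
  fixes A B C :: "'a::real_vector"
  shows "e *\<^sub>R ((1/s) *\<^sub>R (A - B)) + ((e - 1)/s) *\<^sub>R B - e *\<^sub>R ((1/s) *\<^sub>R C) = (1/s) *\<^sub>R (e *\<^sub>R (A - C) - B)"
  by (simp add: algebra_simps diff_divide_distrib scaleR_diff_left)

lemma vec_id2:
  fixes A C :: "'a::real_vector"
  shows "((e - 1)/s) *\<^sub>R A - e *\<^sub>R ((1/s) *\<^sub>R C) = (1/s) *\<^sub>R (e *\<^sub>R (A - C) - A)"
  by (simp add: algebra_simps diff_divide_distrib scaleR_diff_left)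

context sg
begin

lemma Fi_shift:
  assumes s: "0 \<le> s" and b: "0 \<le> b"
  shows "T s (Fi l b y) = exp (l * s) *\<^sub>R (Fi l (s + b) y - Fi l s y)"
proof -
  let ?g = "\<lambda>t. exp (- l * t) *\<^sub>R T t y"
  have "T s (Fi l b y) = integral {0..b} (T s \<circ> ?g)"
    unfolding Fi_def by (rule integral_linear[OF g_int T_bl[OF s], symmetric]) simp
  also have "\<dots> = integral {0..b} (\<lambda>t. exp (l * s) *\<^sub>R (?g \<circ> (+) s) t)"
  proof (rule integral_cong)
    fix t assume t: "t \<in> {0..b}"
    have e: "exp (l * s) * exp (- l * (s + t)) = exp (- l * t)"
      by (simp add: exp_add[symmetric] algebra_simps)
    have "(T s \<circ> ?g) t = exp (- l * t) *\<^sub>R T (s + t) y"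
      using t s T_lin_scale T_add by simp
    also have "\<dots> = (exp (l * s) * exp (- l * (s + t))) *\<^sub>R T (s + t) y" by (simp only: e)
    also have "\<dots> = exp (l * s) *\<^sub>R (?g \<circ> (+) s) t" by simp
    finally show "(T s \<circ> ?g) t = exp (l * s) *\<^sub>R (?g \<circ> (+) s) t" .
  qed
  also have "\<dots> = exp (l * s) *\<^sub>R integral {0..b} (?g \<circ> (+) s)" by (simp only: integral_cmul)
  also have "integral {0..b} (?g \<circ> (+) s) = integral {0 + s..b + s} ?g" by (rule integral_shift_Icc_real)
  also have "\<dots> = Fi l (s + b) y - Fi l s y" using Fi_split[of s "s + b" l y] s b by (simp add: add.commute)
  finally show ?thesis .
qed

lemma Fi_avg:
  assumes b: "0 \<le> b"
  shows "((\<lambda>s. (1/s) *\<^sub>R (Fi l (b + s) y - Fi l b y)) \<longlongrightarrow> exp (- l * b) *\<^sub>R T b y) (at_right 0)"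
proof -
  have "((\<lambda>s. (1/s) *\<^sub>R integral {b..b+s} (\<lambda>t. exp (- l * t) *\<^sub>R T t y)) \<longlongrightarrow> exp (- l * b) *\<^sub>R T b y) (at_right 0)"
    by (rule int_avg[OF g_cont]) (use b in auto)
  moreover have "\<forall>\<^sub>F s in at_right 0. (1/s) *\<^sub>R integral {b..b+s} (\<lambda>t. exp (- l * t) *\<^sub>R T t y) = (1/s) *\<^sub>R (Fi l (b + s) y - Fi l b y)"
    using eventually_at_right_less[of 0] by eventually_elim (use Fi_split[of b] b in simp)
  ultimately show ?thesis by (rule Lim_transform_eventually)
qed

lemma Fi_avg0: "((\<lambda>s. (1/s) *\<^sub>R Fi l s y) \<longlongrightarrow> y) (at_right 0)"
  using Fi_avg[of 0 l y] by (simp add: T0)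

lemma exp_at_right0: "((\<lambda>s. exp (l * s)) \<longlongrightarrow> 1) (at_right (0::real))"
proof -
  have "((\<lambda>s. exp (l * s)) \<longlongrightarrow> exp (l * 0)) (at_right (0::real))"
    by (intro tendsto_intros)
  then show ?thesis by simp
qed

lemma Fi_DA:
  assumes b: "0 \<le> b"
  shows "Fi l b y \<in> DA" "At (Fi l b y) = exp (- l * b) *\<^sub>R T b y + l *\<^sub>R Fi l b y - y"
proof -
  have lim: "((\<lambda>s. exp (l * s) *\<^sub>R ((1/s) *\<^sub>R (Fi l (b + s) y - Fi l b y)) + ((exp (l * s) - 1) / s) *\<^sub>R Fi l b y
       - exp (l * s) *\<^sub>R ((1/s) *\<^sub>R Fi l s y)) \<longlongrightarrow> 1 *\<^sub>R (exp (- l * b) *\<^sub>R T b y) + l *\<^sub>R Fi l b y - 1 *\<^sub>R y) (at_right 0)"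
    by (intro tendsto_intros exp_at_right0 Fi_avg b Fi_avg0 exp_quot_lim)
  have "\<forall>\<^sub>F s in at_right 0. exp (l * s) *\<^sub>R ((1/s) *\<^sub>R (Fi l (b + s) y - Fi l b y)) + ((exp (l * s) - 1) / s) *\<^sub>R Fi l b y
       - exp (l * s) *\<^sub>R ((1/s) *\<^sub>R Fi l s y) = (1 / s) *\<^sub>R (T s (Fi l b y) - Fi l b y)"
    using eventually_at_right_less[of 0]
  proof eventually_elim
    case (elim s)
    have "T s (Fi l b y) = exp (l * s) *\<^sub>R (Fi l (b + s) y - Fi l s y)" using Fi_shift elim b by (simp add: add.commute)
    then show ?case by (simp only: vec_id1)
  qed
  with lim have "((\<lambda>s. (1 / s) *\<^sub>R (T s (Fi l b y) - Fi l b y)) \<longlongrightarrow> exp (- l * b) *\<^sub>R T b y + l *\<^sub>R Fi l b y - y) (at_right 0)"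
    using Lim_transform_eventually by fastforce
  then show "Fi l b y \<in> DA" "At (Fi l b y) = exp (- l * b) *\<^sub>R T b y + l *\<^sub>R Fi l b y - y"
    using gen_intro by blast+
qed

lemma Rs_shift:
  assumes l: "l > \<omega>" and s: "0 \<le> s"
  shows "T s (Rs l y) = exp (l * s) *\<^sub>R (Rs l y - Fi l s y)"
proof -
  have A: "((\<lambda>b. T s (Fi l b y)) \<longlongrightarrow> T s (Rs l y)) at_top"
    by (rule bounded_linear.tendsto[OF T_bl[OF s] Rs_tendsto[OF l]])
  have "((\<lambda>b. Fi l (s + b) y) \<longlongrightarrow> Rs l y) at_top"
    by (rule filterlim_compose[OF Rs_tendsto[OF l] filterlim_tendsto_add_at_top[OF tendsto_const filterlim_ident]])
  then have B: "((\<lambda>b. exp (l * s) *\<^sub>R (Fi l (s + b) y - Fi l s y)) \<longlongrightarrow> exp (l * s) *\<^sub>R (Rs l y - Fi l s y)) at_top"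
    by (intro tendsto_intros)
  have "\<forall>\<^sub>F b in at_top. exp (l * s) *\<^sub>R (Fi l (s + b) y - Fi l s y) = T s (Fi l b y)"
    using eventually_ge_at_top[of 0] by eventually_elim (use Fi_shift s in simp)
  with B have "((\<lambda>b. T s (Fi l b y)) \<longlongrightarrow> exp (l * s) *\<^sub>R (Rs l y - Fi l s y)) at_top"
    using Lim_transform_eventually by fastforce
  then show ?thesis by (rule tendsto_unique[OF trivial_limit_at_top_linorder A])
qed

lemma Rs_DA:
  assumes l: "l > \<omega>"
  shows "Rs l y \<in> DA" "At (Rs l y) = l *\<^sub>R Rs l y - y"
proof -
  have lim: "((\<lambda>s. ((exp (l * s) - 1) / s) *\<^sub>R Rs l y - exp (l * s) *\<^sub>R ((1/s) *\<^sub>R Fi l s y))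
      \<longlongrightarrow> l *\<^sub>R Rs l y - 1 *\<^sub>R y) (at_right 0)"
    by (intro tendsto_intros exp_at_right0 Fi_avg0 exp_quot_lim)
  have "\<forall>\<^sub>F s in at_right 0. ((exp (l * s) - 1) / s) *\<^sub>R Rs l y - exp (l * s) *\<^sub>R ((1/s) *\<^sub>R Fi l s y)
       = (1 / s) *\<^sub>R (T s (Rs l y) - Rs l y)"
    using eventually_at_right_less[of 0]
  proof eventually_elim
    case (elim s)
    have "T s (Rs l y) = exp (l * s) *\<^sub>R (Rs l y - Fi l s y)" using Rs_shift l elim by simp
    then show ?case by (simp only: vec_id2)
  qed
  with lim have "((\<lambda>s. (1 / s) *\<^sub>R (T s (Rs l y) - Rs l y)) \<longlongrightarrow> l *\<^sub>R Rs l y - y) (at_right 0)"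
    using Lim_transform_eventually by fastforce
  then show "Rs l y \<in> DA" "At (Rs l y) = l *\<^sub>R Rs l y - y"
    using gen_intro by blast+
qed

end


context sg
begin

lemma T_Fi_comm:
  assumes s: "0 \<le> s"
  shows "T s (Fi l b x) = Fi l b (T s x)"
proof -
  have "T s (Fi l b x) = integral {0..b} (T s \<circ> (\<lambda>t. exp (- l * t) *\<^sub>R T t x))"
    unfolding Fi_def by (rule integral_linear[OF g_int T_bl[OF s], symmetric]) simp
  also have "\<dots> = Fi l b (T s x)"
    unfolding Fi_def by (rule integral_cong) (use s in \<open>auto simp: T_lin_scale T_comm\<close>)
  finally show ?thesis .
qed

lemma Rs_add:
  assumes l: "l > \<omega>"
  shows "Rs l (x + y) = Rs l x + Rs l y"
proof -
  have "(\<lambda>n. Fi l (real n) (x + y)) \<longlonglongrightarrow> Rs l x + Rs l y"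
    using tendsto_add[OF Rs_seq[OF l] Rs_seq[OF l]] by (simp add: Fi_add)
  then show ?thesis using LIMSEQ_unique[OF Rs_seq[OF l]] by blast
qed

lemma Rs_scale:
  assumes l: "l > \<omega>"
  shows "Rs l (c *\<^sub>R x) = c *\<^sub>R Rs l x"
proof -
  have "(\<lambda>n. Fi l (real n) (c *\<^sub>R x)) \<longlonglongrightarrow> c *\<^sub>R Rs l x"
    using tendsto_scaleR[OF tendsto_const Rs_seq[OF l]] by (simp add: Fi_scale)
  then show ?thesis using LIMSEQ_unique[OF Rs_seq[OF l]] by blast
qed

lemma Rs_bl:
  assumes l: "l > \<omega>"
  shows "bounded_linear (Rs l)"
proof (rule bounded_linear_intro[of _ "M / (l - \<omega>)"])
  show "Rs l (x + y) = Rs l x + Rs l y" for x y by (rule Rs_add[OF l])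
  show "Rs l (r *\<^sub>R x) = r *\<^sub>R Rs l x" for r x by (rule Rs_scale[OF l])
  fix x :: 'x
  have "M * norm x / (l - \<omega>) = norm x * (M / (l - \<omega>))" by simp
  then show "norm (Rs l x) \<le> norm x * (M / (l - \<omega>))" using Rs_norm[OF l, of x] by linarith
qed

lemma Rs_diff: "l > \<omega> \<Longrightarrow> Rs l (x - y) = Rs l x - Rs l y"
  using linear_diff[OF bounded_linear.linear[OF Rs_bl]] by blast

lemma T_Rs_comm:
  assumes l: "l > \<omega>" and s: "0 \<le> s"
  shows "T s (Rs l x) = Rs l (T s x)"
proof -
  have "(\<lambda>n. T s (Fi l (real n) x)) \<longlonglongrightarrow> T s (Rs l x)"
    by (rule bounded_linear.tendsto[OF T_bl[OF s] Rs_seq[OF l]])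
  moreover have "(\<lambda>n. T s (Fi l (real n) x)) \<longlonglongrightarrow> Rs l (T s x)"
    using Rs_seq[OF l, of "T s x"] by (simp add: T_Fi_comm[OF s])
  ultimately show ?thesis by (rule LIMSEQ_unique)
qed

lemma comm_generic:
  assumes B: "bounded_linear B" and x: "x \<in> DA" and Bx: "B x \<in> DA"
    and TB: "\<And>s. 0 \<le> s \<Longrightarrow> T s (B x) = B (T s x)"
  shows "At (B x) = B (At x)"
proof -
  have "((\<lambda>h. B ((1 / h) *\<^sub>R (T h x - x))) \<longlongrightarrow> B (At x)) (at_right 0)"
    by (rule bounded_linear.tendsto[OF B gen_lim[OF x]])
  moreover have "\<forall>\<^sub>F h in at_right 0. B ((1 / h) *\<^sub>R (T h x - x)) = (1 / h) *\<^sub>R (T h (B x) - B x)"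
    using eventually_at_right_less[of 0]
    by eventually_elim (simp add: TB linear_diff[OF bounded_linear.linear[OF B]] linear_scale[OF bounded_linear.linear[OF B]])
  ultimately have "((\<lambda>h. (1 / h) *\<^sub>R (T h (B x) - B x)) \<longlongrightarrow> B (At x)) (at_right 0)"
    by (rule Lim_transform_eventually)
  then show ?thesis using gen_lim[OF Bx] tendsto_unique[OF trivial_limit_at_right_real] by blast
qed

lemma Rs_comm: "l > \<omega> \<Longrightarrow> x \<in> DA \<Longrightarrow> At (Rs l x) = Rs l (At x)"
  by (rule comm_generic[OF Rs_bl _ Rs_DA(1)]) (auto simp: T_Rs_comm)

lemma Fi_comm: "l > \<omega> \<Longrightarrow> 0 \<le> b \<Longrightarrow> x \<in> DA \<Longrightarrow> At (Fi l b x) = Fi l b (At x)"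
  by (rule comm_generic[OF Fi_bl _ Fi_DA(1)]) (auto simp: T_Fi_comm)

lemma Rs_inv:
  assumes l: "l > \<omega>" and x: "x \<in> DA"
  shows "Rs l (l *\<^sub>R x - At x) = x"
proof -
  have "Rs l (l *\<^sub>R x - At x) = l *\<^sub>R Rs l x - Rs l (At x)" using Rs_diff[OF l] Rs_scale[OF l] by simp
  also have "\<dots> = l *\<^sub>R Rs l x - At (Rs l x)" using Rs_comm[OF l x] by simp
  also have "\<dots> = x" using Rs_DA(2)[OF l] by simp
  finally show ?thesis .
qed

lemma Rs_unique: "l > \<omega> \<Longrightarrow> x \<in> DA \<Longrightarrow> l *\<^sub>R x - At x = y \<Longrightarrow> x = Rs l y"
  using Rs_inv by metis

lemma resolvent_eq:
  assumes l: "l > \<omega>"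
  shows "resolvent DA At l y = Rs l y"
  unfolding resolvent_def
proof (rule the_equality)
  show "Rs l y \<in> DA \<and> l *\<^sub>R Rs l y - At (Rs l y) = y" using Rs_DA[OF l] by simp
  fix x assume "x \<in> DA \<and> l *\<^sub>R x - At x = y"
  then show "x = Rs l y" using Rs_unique[OF l] by blast
qed

lemma Fi_pos:
  assumes y: "0 \<le> y" and b: "0 \<le> b"
  shows "0 \<le> Fi l b y"
  unfolding Fi_def
  by (rule integral_nonneg_bl[OF b g_cont]) (auto intro!: scaleR_nonneg_nonneg T_nonneg y)

lemma Rs_pos:
  assumes l: "l > \<omega>" and y: "0 \<le> y"
  shows "0 \<le> Rs l y"
proof -
  have "Rs l y \<in> {x. 0 \<le> x}"
    by (rule closed_sequentially[OF closed_nonneg _ Rs_seq[OF l]]) (use Fi_pos[OF y] in simp)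
  then show ?thesis by simp
qed

lemma DA_dense:
  assumes e: "e > 0"
  shows "\<exists>x\<in>DA. (0 \<le> y \<longrightarrow> 0 \<le> x) \<and> norm (y - x) < e"
proof -
  have "\<forall>\<^sub>F s in at_right 0. dist ((1/s) *\<^sub>R Fi 0 s y) y < e \<and> 0 < s"
    using tendstoD[OF Fi_avg0 e] eventually_at_right_less[of 0] by (rule eventually_conj)
  then obtain s where s: "dist ((1/s) *\<^sub>R Fi 0 s y) y < e" "0 < s"
    using eventually_happens[of _ "at_right (0::real)"] trivial_limit_at_right_real by blast
  have "(1/s) *\<^sub>R Fi 0 s y \<in> DA" using DA_scale Fi_DA(1) s(2) by simp
  moreover have "0 \<le> y \<longrightarrow> 0 \<le> (1/s) *\<^sub>R Fi 0 s y" using Fi_pos s(2) by (auto intro: scaleR_nonneg_nonneg)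
  moreover have "norm (y - (1/s) *\<^sub>R Fi 0 s y) < e" using s(1) by (simp add: dist_norm norm_minus_commute)
  ultimately show ?thesis by blast
qed

end


lemma lin_sum:
  assumes L: "linear_on_sub S f" and fin: "finite I" and xs: "\<And>i. i \<in> I \<Longrightarrow> x i \<in> S"
  shows "(\<Sum>i\<in>I. c i *\<^sub>R x i) \<in> S \<and> f (\<Sum>i\<in>I. c i *\<^sub>R x i) = (\<Sum>i\<in>I. c i *\<^sub>R f (x i))"
  using fin xs
proof (induction I rule: finite_induct)
  case empty
  have sub: "subspace S" using L unfolding linear_on_sub_def by blast
  then have "0 \<in> S" by (rule subspace_0)
  then have "f (0 *\<^sub>R 0) = 0 *\<^sub>R f 0" using L unfolding linear_on_sub_def by blast
  then show ?case using \<open>0 \<in> S\<close> by simp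
next
  case (insert i I)
  have sub: "subspace S" using L unfolding linear_on_sub_def by blast
  have IH: "(\<Sum>i\<in>I. c i *\<^sub>R x i) \<in> S" "f (\<Sum>i\<in>I. c i *\<^sub>R x i) = (\<Sum>i\<in>I. c i *\<^sub>R f (x i))"
    using insert by auto
  have xi: "x i \<in> S" using insert by auto
  have cxi: "c i *\<^sub>R x i \<in> S" using subspace_mul[OF sub xi] .
  have "(\<Sum>i\<in>insert i I. c i *\<^sub>R x i) = c i *\<^sub>R x i + (\<Sum>i\<in>I. c i *\<^sub>R x i)" using insert by simp
  moreover have "c i *\<^sub>R x i + (\<Sum>i\<in>I. c i *\<^sub>R x i) \<in> S" using subspace_add[OF sub cxi IH(1)] .
  moreover have "f (c i *\<^sub>R x i + (\<Sum>i\<in>I. c i *\<^sub>R x i)) = c i *\<^sub>R f (x i) + (\<Sum>i\<in>I. c i *\<^sub>R f (x i))"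
    using L cxi IH xi unfolding linear_on_sub_def by simp
  ultimately show ?case using insert by simp
qed

lemma RS_pt: "k < n \<Longrightarrow> a \<le> b \<Longrightarrow> a + real k * ((b - a) / real n) \<in> {a..(b::real)}"
proof -
  assume k: "k < n" and ab: "a \<le> b"
  have "real k / real n \<le> 1" using k by simp
  then have "(real k / real n) * (b - a) \<le> 1 * (b - a)" using ab by (intro mult_right_mono) auto
  then have "real k * ((b - a) / real n) \<le> b - a" by (simp add: times_divide_eq_right mult.commute)
  moreover have "0 \<le> real k * ((b - a) / real n)" using ab by simp
  ultimately show ?thesis by auto
qed

lemma graph_bounded_C:
  assumes "graph_bounded Dom Op F"
  obtains C where "C \<ge> 0" "\<And>x. x \<in> Dom \<Longrightarrow> norm (F x) \<le> C * (norm x + norm (Op x))"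
proof -
  obtain C where C: "\<forall>x\<in>Dom. norm (F x) \<le> C * (norm x + norm (Op x))"
    using assms unfolding graph_bounded_def by blast
  have "norm (F x) \<le> max C 0 * (norm x + norm (Op x))" if "x \<in> Dom" for x
    using C that by (meson max.cobounded1 mult_right_mono norm_ge_zero add_nonneg_nonneg order_trans)
  then show ?thesis using that[of "max C 0"] by simp
qed

context sg
begin

lemma graph_F:
  assumes Fb: "graph_bounded Dt At F"
  shows "linear_on_sub Dt F" "\<And>x y. x \<in> Dt \<Longrightarrow> y \<in> Dt \<Longrightarrow> F (x - y) = F x - F y"
proof -
  show L: "linear_on_sub Dt F" using Fb unfolding graph_bounded_def by blast
  fix x y assume "x \<in> Dt" "y \<in> Dt"
  then have "F (x + (-1) *\<^sub>R y) = F x + (-1) *\<^sub>R F y" using L Dt_scale unfolding linear_on_sub_def by metis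
  then show "F (x - y) = F x - F y" by simp
qed

lemma graph_cont:
  assumes Fb: "graph_bounded Dt At F" and cE: "continuous_on S E" and cAE: "continuous_on S (\<lambda>t. At (E t))"
    and ED: "\<And>t. t \<in> S \<Longrightarrow> E t \<in> Dt"
  shows "continuous_on S (\<lambda>t. F (E t))"
  unfolding continuous_on_def
proof
  fix x assume x: "x \<in> S"
  obtain C where C: "C \<ge> 0" "\<And>x. x \<in> Dt \<Longrightarrow> norm (F x) \<le> C * (norm x + norm (At x))"
    using graph_bounded_C[OF Fb] by blast
  have l1: "((\<lambda>t. E t - E x) \<longlongrightarrow> 0) (at x within S)"
    using cE x unfolding continuous_on_def by (intro LIM_zero) blast
  have l2: "((\<lambda>t. At (E t) - At (E x)) \<longlongrightarrow> 0) (at x within S)"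
    using cAE x unfolding continuous_on_def by (intro LIM_zero) blast
  have l3: "((\<lambda>t. C * (norm (E t - E x) + norm (At (E t) - At (E x)))) \<longlongrightarrow> C * (0 + 0)) (at x within S)"
    by (intro tendsto_intros tendsto_norm_zero l1 l2)
  have ev: "\<forall>\<^sub>F t in at x within S. norm (F (E t) - F (E x)) \<le> C * (norm (E t - E x) + norm (At (E t) - At (E x)))"
    unfolding eventually_at_filter
  proof (rule always_eventually, intro allI impI)
    fix t assume t: "t \<in> S"
    have "F (E t) - F (E x) = F (E t - E x)" using graph_F(2)[OF Fb] ED t x by simp
    moreover have "At (E t - E x) = At (E t) - At (E x)" using At_diff ED t x by simp
    ultimately show "norm (F (E t) - F (E x)) \<le> C * (norm (E t - E x) + norm (At (E t) - At (E x)))"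
      using C(2)[of "E t - E x"] Dt_diff ED t x by simp
  qed
  have "((\<lambda>t. F (E t) - F (E x)) \<longlongrightarrow> 0) (at x within S)"
    using Lim_null_comparison[OF ev] l3 by simp
  then show "((\<lambda>t. F (E t)) \<longlongrightarrow> F (E x)) (at x within S)" by (rule LIM_zero_cancel)
qed

lemma graph_int:
  fixes a b :: real and F :: "'x \<Rightarrow> 'w::banach"
  assumes Fb: "graph_bounded Dt At F" and ab: "a \<le> b"
    and cE: "continuous_on {a..b} E" and cAE: "continuous_on {a..b} (\<lambda>t. At (E t))"
    and ED: "\<And>t. t \<in> {a..b} \<Longrightarrow> E t \<in> Dt"
    and ID: "integral {a..b} E \<in> Dt" and IA: "At (integral {a..b} E) = integral {a..b} (\<lambda>t. At (E t))"
  shows "F (integral {a..b} E) = integral {a..b} (\<lambda>t. F (E t))"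
proof -
  obtain C where C: "C \<ge> 0" "\<And>x. x \<in> Dt \<Longrightarrow> norm (F x) \<le> C * (norm x + norm (At x))"
    using graph_bounded_C[OF Fb] by blast
  have LA: "linear_on_sub Dt At" using op unfolding closed_dense_operator_def by blast
  have LF: "linear_on_sub Dt F" using graph_F(1)[OF Fb] .
  have pts: "\<And>k. k \<in> {..<n} \<Longrightarrow> E (a + real k * ((b - a) / real n)) \<in> Dt" for n
    using ED RS_pt ab by simp
  have LS: "(\<Sum>k<n. ((b - a) / real n) *\<^sub>R E (a + real k * ((b - a) / real n))) \<in> Dt \<and>
     At (\<Sum>k<n. ((b - a) / real n) *\<^sub>R E (a + real k * ((b - a) / real n))) = (\<Sum>k<n. ((b - a) / real n) *\<^sub>R At (E (a + real k * ((b - a) / real n))))" for n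
    by (rule lin_sum[OF LA finite_lessThan pts])
  have LSF: "F (\<Sum>k<n. ((b - a) / real n) *\<^sub>R E (a + real k * ((b - a) / real n))) = (\<Sum>k<n. ((b - a) / real n) *\<^sub>R F (E (a + real k * ((b - a) / real n))))" for n
    using lin_sum[OF LF finite_lessThan pts] by (rule conjunct2)
  have RSD: "RS E a b n \<in> Dt" for n unfolding RS_def using LS by (rule conjunct1)
  have RSA: "At (RS E a b n) = RS (\<lambda>t. At (E t)) a b n" for n unfolding RS_def using LS by (rule conjunct2)
  have RSF: "F (RS E a b n) = RS (\<lambda>t. F (E t)) a b n" for n unfolding RS_def by (rule LSF)
  have c1: "RS E a b \<longlonglongrightarrow> integral {a..b} E" by (rule RS_conv[OF ab cE])
  have c2: "(\<lambda>n. At (RS E a b n)) \<longlonglongrightarrow> At (integral {a..b} E)" unfolding RSA IA by (rule RS_conv[OF ab cAE])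
  have l3: "(\<lambda>n. C * (norm (RS E a b n - integral {a..b} E) + norm (At (RS E a b n) - At (integral {a..b} E)))) \<longlonglongrightarrow> C * (0 + 0)"
    by (intro tendsto_intros tendsto_norm_zero LIM_zero c1 c2)
  have ev: "\<forall>\<^sub>F n in sequentially. norm (F (RS E a b n) - F (integral {a..b} E)) \<le> C * (norm (RS E a b n - integral {a..b} E) + norm (At (RS E a b n) - At (integral {a..b} E)))"
  proof (rule always_eventually, rule allI)
    fix n
    have "F (RS E a b n) - F (integral {a..b} E) = F (RS E a b n - integral {a..b} E)" using graph_F(2)[OF Fb RSD ID] by simp
    moreover have "At (RS E a b n - integral {a..b} E) = At (RS E a b n) - At (integral {a..b} E)" using At_diff RSD ID by simp
    ultimately show "norm (F (RS E a b n) - F (integral {a..b} E)) \<le> C * (norm (RS E a b n - integral {a..b} E) + norm (At (RS E a b n) - At (integral {a..b} E)))"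
      using C(2)[of "RS E a b n - integral {a..b} E"] Dt_diff RSD ID by simp
  qed
  have "(\<lambda>n. F (RS E a b n) - F (integral {a..b} E)) \<longlonglongrightarrow> 0"
    using Lim_null_comparison[OF ev] l3 by simp
  then have A: "(\<lambda>n. F (RS E a b n)) \<longlonglongrightarrow> F (integral {a..b} E)" by (rule LIM_zero_cancel)
  have B: "(\<lambda>n. F (RS E a b n)) \<longlonglongrightarrow> integral {a..b} (\<lambda>t. F (E t))"
  proof -
    have gc: "continuous_on {a..b} (\<lambda>t. F (E t))" by (rule graph_cont[OF Fb cE cAE]) (rule ED)
    show ?thesis unfolding RSF by (rule RS_conv[OF ab gc])
  qed
  show ?thesis using LIMSEQ_unique[OF A B] .
qed

end


context sg
begin

lemma Rs_zero: "l > \<omega> \<Longrightarrow> Rs l 0 = 0"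
  using Rs_scale[of l 0 0] by simp

lemma DA_ker_zero: "l > \<omega> \<Longrightarrow> u \<in> DA \<Longrightarrow> l *\<^sub>R u - At u = 0 \<Longrightarrow> u = 0"
  using Rs_unique Rs_zero by metis

lemma dir_unique:
  assumes l: "l > \<omega>" and x1: "x1 \<in> Dt" "l *\<^sub>R x1 - At x1 = 0" "G x1 = v"
    and x2: "x2 \<in> Dt" "l *\<^sub>R x2 - At x2 = 0" "G x2 = v"
  shows "x1 = x2"
proof -
  have "x1 - x2 \<in> DA" using x1 x2 Dt_diff G_diff by simp
  moreover have "l *\<^sub>R (x1 - x2) - At (x1 - x2) = 0"
    using x1 x2 At_diff[OF x1(1) x2(1)] by (simp add: algebra_simps)
  ultimately show ?thesis using DA_ker_zero[OF l] by fastforce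
qed

lemma dir_ex:
  assumes l: "l > \<omega>" and surj: "G ` Dt = UNIV"
  shows "\<exists>x. x \<in> Dt \<and> l *\<^sub>R x - At x = 0 \<and> G x = v"
proof -
  obtain w where w: "w \<in> Dt" "G w = v" using surj by (metis UNIV_I imageE)
  define z where "z = l *\<^sub>R w - At w"
  define x where "x = w - Rs l z"
  have R: "Rs l z \<in> DA" "At (Rs l z) = l *\<^sub>R Rs l z - z" using Rs_DA[OF l] by auto
  have "x \<in> Dt" unfolding x_def using w R Dt_diff by simp
  moreover have "l *\<^sub>R x - At x = 0"
  proof -
    have Ax: "At x = At w - (l *\<^sub>R Rs l z - z)" unfolding x_def using At_diff[OF w(1), of "Rs l z"] R by simp
    have "l *\<^sub>R x - At x = (l *\<^sub>R w - At w) - z" unfolding Ax by (simp add: x_def scaleR_diff_right)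
    then show ?thesis by (simp add: z_def)
  qed
  moreover have "G x = v" unfolding x_def using G_diff[OF w(1), of "Rs l z"] R w by simp
  ultimately show ?thesis by blast
qed

lemma dir_eqI:
  assumes l: "l > \<omega>" and surj: "G ` Dt = UNIV"
    and x: "x \<in> Dt" "l *\<^sub>R x - At x = 0" "G x = v"
  shows "dirichlet Dt At G l v = x"
  unfolding dirichlet_def
proof (rule the_equality)
  show "x \<in> Dt \<and> l *\<^sub>R x - At x = 0 \<and> G x = v" using x by blast
  fix y assume y: "y \<in> Dt \<and> l *\<^sub>R y - At y = 0 \<and> G y = v"
  then show "y = x" using dir_unique[OF l _ _ _ x, of y] by blast
qed

lemma dir_prop:
  assumes l: "l > \<omega>" and surj: "G ` Dt = UNIV"
  shows "dirichlet Dt At G l v \<in> Dt" "l *\<^sub>R dirichlet Dt At G l v - At (dirichlet Dt At G l v) = 0"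
    "G (dirichlet Dt At G l v) = v"
proof -
  obtain x where x: "x \<in> Dt" "l *\<^sub>R x - At x = 0" "G x = v" using dir_ex[OF l surj] by blast
  have "dirichlet Dt At G l v = x" by (rule dir_eqI[OF l surj x])
  then show "dirichlet Dt At G l v \<in> Dt" "l *\<^sub>R dirichlet Dt At G l v - At (dirichlet Dt At G l v) = 0"
    "G (dirichlet Dt At G l v) = v" using x by auto
qed

lemma dir_At: "l > \<omega> \<Longrightarrow> G ` Dt = UNIV \<Longrightarrow> At (dirichlet Dt At G l v) = l *\<^sub>R dirichlet Dt At G l v"
  using dir_prop(2) by (metis eq_iff_diff_eq_0)

lemma dir_diff:
  assumes l: "l > \<omega>" and surj: "G ` Dt = UNIV"
  shows "dirichlet Dt At G l (v1 - v2) = dirichlet Dt At G l v1 - dirichlet Dt At G l v2"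
proof (rule dir_eqI[OF l surj])
  note p1 = dir_prop[OF l surj, of v1] and p2 = dir_prop[OF l surj, of v2]
  show "dirichlet Dt At G l v1 - dirichlet Dt At G l v2 \<in> Dt" using p1 p2 Dt_diff by simp
  show "l *\<^sub>R (dirichlet Dt At G l v1 - dirichlet Dt At G l v2) - At (dirichlet Dt At G l v1 - dirichlet Dt At G l v2) = 0"
    using p1 p2 At_diff[OF p1(1) p2(1)] by (simp add: algebra_simps)
  show "G (dirichlet Dt At G l v1 - dirichlet Dt At G l v2) = v1 - v2" using p1 p2 G_diff[OF p1(1) p2(1)] by simp
qed

lemma dir_resid:
  assumes l: "l > \<omega>" and m: "m > \<omega>" and surj: "G ` Dt = UNIV"
  shows "dirichlet Dt At G l v - dirichlet Dt At G m v = (m - l) *\<^sub>R Rs l (dirichlet Dt At G m v)"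
proof -
  note pl = dir_prop[OF l surj, of v] and pm = dir_prop[OF m surj, of v]
  define u where "u = dirichlet Dt At G l v - dirichlet Dt At G m v"
  have uDA: "u \<in> DA" unfolding u_def using pl pm Dt_diff G_diff[OF pl(1) pm(1)] by simp
  have Am: "At (dirichlet Dt At G m v) = m *\<^sub>R dirichlet Dt At G m v" using dir_At[OF m surj] .
  have Al: "At (dirichlet Dt At G l v) = l *\<^sub>R dirichlet Dt At G l v" using dir_At[OF l surj] .
  have "l *\<^sub>R u - At u = (m - l) *\<^sub>R dirichlet Dt At G m v"
    unfolding u_def using At_diff[OF pl(1) pm(1)] Am Al by (simp add: algebra_simps)
  then have "u = Rs l ((m - l) *\<^sub>R dirichlet Dt At G m v)" using Rs_unique[OF l uDA] by blast
  then show ?thesis unfolding u_def using Rs_scale[OF l] by simp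
qed

lemma nR_identity:
  assumes l: "l > \<omega>" and surj: "G ` Dt = UNIV" and z: "z \<in> Dt"
  shows "l *\<^sub>R Rs l z - z = Rs l (At z) - dirichlet Dt At G l (G z)"
proof -
  define a where "a = Rs l z"
  define c where "c = Rs l (At z)"
  define d where "d = dirichlet Dt At G l (G z)"
  have a: "a \<in> Dt" "G a = 0" "At a = l *\<^sub>R a - z" using Rs_DA[OF l] unfolding a_def by auto
  have c: "c \<in> Dt" "G c = 0" "At c = l *\<^sub>R c - At z" using Rs_DA[OF l] unfolding c_def by auto
  have d: "d \<in> Dt" "G d = G z" "At d = l *\<^sub>R d" using dir_prop[OF l surj] dir_At[OF l surj] unfolding d_def by auto
  define u where "u = l *\<^sub>R a - z - c + d"
  have uD: "u \<in> Dt" unfolding u_def using a c d z by (simp add: Dt_add Dt_diff Dt_scale)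
  have Gu: "G u = 0" unfolding u_def using a c d z
    by (simp add: G_add G_diff G_scale Dt_add Dt_diff Dt_scale)
  have Au: "At u = l *\<^sub>R At a - At z - At c + At d"
    unfolding u_def using a(1) c(1) d(1) z by (simp add: At_add At_diff At_scale Dt_add Dt_diff Dt_scale)
  have "At u = l *\<^sub>R u"
    unfolding Au a(3) c(3) d(3) unfolding u_def by (simp add: algebra_simps)
  then have "u = 0" using DA_ker_zero[OF l, of u] uD Gu by simp
  then show ?thesis unfolding u_def a_def c_def d_def by (simp add: algebra_simps)
qed

end


lemma nn_hk:
  fixes f :: "real \<Rightarrow> real"
  assumes "\<And>t. t \<in> {a..b} \<Longrightarrow> 0 \<le> f t" "continuous_on {a..b} f"
  shows "(\<integral>\<^sup>+ t\<in>{a..b}. ennreal (f t) \<partial>lborel) = ennreal (integral {a..b} f)"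
proof -
  have "(f has_integral integral {a..b} f) {a..b}" using integrable_continuous_real[OF assms(2)] by blast
  from nn_integral_has_integral_lebesgue[OF assms(1) this]
  have "(\<integral>\<^sup>+ x. ennreal (indicator {a..b} x * f x) \<partial>lborel) = ennreal (integral {a..b} f)" .
  moreover have "(\<integral>\<^sup>+ t\<in>{a..b}. ennreal (f t) \<partial>lborel) = (\<integral>\<^sup>+ x. ennreal (indicator {a..b} x * f x) \<partial>lborel)"
    by (rule nn_integral_cong) (auto split: split_indicator)
  ultimately show ?thesis by simp
qed

lemma young_pw:
  fixes u c p :: real
  assumes u: "0 \<le> u" and c: "0 < c" and p: "1 \<le> p"
  shows "u \<le> c + c powr (1 - p) * u powr p"
proof -
  define w where "w = u / c"
  have w: "0 \<le> w" unfolding w_def using u c by simp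
  have wle: "w \<le> 1 + w powr p"
  proof (cases "w \<le> 1")
    case True then show ?thesis by (simp add: add_increasing2)
  next
    case False
    then have "w powr 1 \<le> w powr p" using p by (intro powr_mono) auto
    then show ?thesis using w by simp
  qed
  have "u = c * w" unfolding w_def using c by simp
  also have "\<dots> \<le> c * (1 + w powr p)" using wle c by simp
  also have "w powr p = u powr p / c powr p" unfolding w_def by (rule powr_divide)
  also have "c * (1 + u powr p / c powr p) = c + (c powr 1 / c powr p) * u powr p"
    using c by (simp add: field_simps)
  also have "c powr 1 / c powr p = c powr (1 - p)" by (rule powr_diff[symmetric])
  finally show ?thesis .
qed

locale sg2 = sg At Dt G T M \<omega> for At :: "'x::banach_lattice \<Rightarrow> 'x" and Dt and G :: "'x \<Rightarrow> 'v::banach_lattice" and T M \<omega> +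
  fixes Gam :: "'x \<Rightarrow> 'v" and \<alpha> \<gamma> p :: real
  assumes Gam_bdd: "graph_bounded Dt At Gam"
    and Gam_pos: "\<forall>x\<in>Dt. 0 \<le> x \<longrightarrow> 0 \<le> Gam x"
    and p1: "1 \<le> p" and alpha: "\<alpha> > 0" and gamma: "\<gamma> > 0"
    and adm: "\<forall>x\<in>DA. 0 \<le> x \<longrightarrow>
        (\<integral>\<^sup>+ t\<in>{0..\<alpha>}. ennreal (norm (Gam (T t x)) powr p) \<partial>lborel) \<le> ennreal (\<gamma> powr p * norm x powr p)"
begin

lemma Gam_diff: "x \<in> Dt \<Longrightarrow> y \<in> Dt \<Longrightarrow> Gam (x - y) = Gam x - Gam y"
  using graph_F(2)[OF Gam_bdd] by blast

lemma Gam_lin: "linear_on_sub Dt Gam" using graph_F(1)[OF Gam_bdd] .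

lemma Gam_add: "x \<in> Dt \<Longrightarrow> y \<in> Dt \<Longrightarrow> Gam (x + y) = Gam x + Gam y"
  using Gam_lin unfolding linear_on_sub_def by blast

lemma Gam_scale: "x \<in> Dt \<Longrightarrow> Gam (c *\<^sub>R x) = c *\<^sub>R Gam x"
  using Gam_lin unfolding linear_on_sub_def by blast

lemma Gam_zero: "Gam 0 = 0"
  using Gam_scale[of 0 0] Dt_sub subspace_0 by fastforce

lemma Gam_C: obtains C where "C \<ge> 0" "\<And>x. x \<in> Dt \<Longrightarrow> norm (Gam x) \<le> C * (norm x + norm (At x))"
  using graph_bounded_C[OF Gam_bdd] by blast

lemma phi_cont:
  assumes x: "x \<in> DA" and S: "S \<subseteq> {0..}"
  shows "continuous_on S (\<lambda>t. Gam (T t x))"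
proof (rule graph_cont[OF Gam_bdd T_cont_on[OF S]])
  show "continuous_on S (\<lambda>t. At (T t x))"
    using T_cont_on[OF S, of "At x"] by (rule continuous_on_cong[THEN iffD1, rotated 2]) (use T_DA[OF x] S in auto)
  fix t assume "t \<in> S" then show "T t x \<in> Dt" using T_DA[OF x] S by auto
qed

lemma int_phi_bound:
  assumes x: "x \<in> DA" and xp: "0 \<le> x"
  shows "integral {0..\<alpha>} (\<lambda>t. norm (Gam (T t x))) \<le> (\<alpha> + \<gamma> powr p) * norm x"
proof (cases "norm x = 0")
  case True
  then have "x = 0" by simp
  have "T t 0 = 0" if "0 \<le> t" for t using T_lin_scale[OF that, of 0 0] by simp
  then have "integral {0..\<alpha>} (\<lambda>t. norm (Gam (T t x))) = integral {0..\<alpha>} (\<lambda>t. 0)"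
    using \<open>x = 0\<close> Gam_zero by (intro integral_cong) auto
  then show ?thesis using True by simp
next
  case False
  define c where "c = norm x"
  have c: "c > 0" using False unfolding c_def by simp
  define phi where "phi t = norm (Gam (T t x))" for t
  have cphi: "continuous_on {0..\<alpha>} phi" unfolding phi_def by (intro continuous_on_norm phi_cont[OF x]) auto
  have cphip: "continuous_on {0..\<alpha>} (\<lambda>t. phi t powr p)"
    using p1 by (intro continuous_on_powr' cphi continuous_on_const) (auto simp: phi_def)
  have "ennreal (integral {0..\<alpha>} (\<lambda>t. phi t powr p)) = (\<integral>\<^sup>+ t\<in>{0..\<alpha>}. ennreal (phi t powr p) \<partial>lborel)"
    by (rule nn_hk[symmetric]) (use cphip in auto)
  also have "\<dots> \<le> ennreal (\<gamma> powr p * c powr p)" using adm x xp unfolding phi_def c_def by blast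
  finally have ip: "integral {0..\<alpha>} (\<lambda>t. phi t powr p) \<le> \<gamma> powr p * c powr p"
    by (subst (asm) ennreal_le_iff) auto
  have "integral {0..\<alpha>} phi \<le> integral {0..\<alpha>} (\<lambda>t. c + c powr (1 - p) * phi t powr p)"
  proof (rule integral_le)
    show "phi integrable_on {0..\<alpha>}" using integrable_continuous_real[OF cphi] .
    show "(\<lambda>t. c + c powr (1 - p) * phi t powr p) integrable_on {0..\<alpha>}"
      by (intro integrable_continuous_real continuous_intros cphip)
    fix t show "phi t \<le> c + c powr (1 - p) * phi t powr p" using young_pw[OF _ c p1] by (simp add: phi_def)
  qed
  also have "\<dots> = integral {0..\<alpha>} (\<lambda>t. c) + integral {0..\<alpha>} (\<lambda>t. c powr (1 - p) * phi t powr p)"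
    by (rule Henstock_Kurzweil_Integration.integral_add) (intro integrable_continuous_real continuous_intros cphip)+
  also have "\<dots> = c * \<alpha> + c powr (1 - p) * integral {0..\<alpha>} (\<lambda>t. phi t powr p)"
    using alpha by simp
  also have "\<dots> \<le> c * \<alpha> + c powr (1 - p) * (\<gamma> powr p * c powr p)"
    using ip by (intro add_left_mono mult_left_mono) auto
  also have "c powr (1 - p) * (\<gamma> powr p * c powr p) = \<gamma> powr p * (c powr (1 - p) * c powr p)" by simp
  also have "c powr (1 - p) * c powr p = c" using c by (simp add: powr_add[symmetric])
  finally show ?thesis unfolding phi_def c_def by (simp add: algebra_simps)
qed

end


context sg2
begin

definition J :: "real \<Rightarrow> 'x \<Rightarrow> real \<Rightarrow> real" where
  "J l x b = integral {0..b} (\<lambda>t. exp (- l * t) * norm (Gam (T t x)))"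

abbreviation "K0 \<equiv> \<alpha> + \<gamma> powr p"

lemma J_cont: "x \<in> DA \<Longrightarrow> S \<subseteq> {0..} \<Longrightarrow> continuous_on S (\<lambda>t. exp (- l * t) * norm (Gam (T t x)))"
  by (intro continuous_intros continuous_on_norm phi_cont) auto

lemma J_int: "x \<in> DA \<Longrightarrow> 0 \<le> a \<Longrightarrow> (\<lambda>t. exp (- l * t) * norm (Gam (T t x))) integrable_on {a..b}"
  by (rule integrable_continuous_real[OF J_cont]) auto

lemma J_mono:
  assumes x: "x \<in> DA" and b: "0 \<le> b" "b \<le> c"
  shows "J l x b \<le> J l x c"
proof -
  have "J l x c = J l x b + integral {b..c} (\<lambda>t. exp (- l * t) * norm (Gam (T t x)))"
    unfolding J_def using Henstock_Kurzweil_Integration.integral_combine[OF b J_int[OF x order_refl]] by simp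
  moreover have "0 \<le> integral {b..c} (\<lambda>t. exp (- l * t) * norm (Gam (T t x)))"
    by (rule integral_nonneg[OF J_int[OF x b(1)]]) simp
  ultimately show ?thesis by simp
qed

lemma J_first:
  assumes l: "0 \<le> l" and x: "x \<in> DA" and xp: "0 \<le> x"
  shows "integral {0..\<alpha>} (\<lambda>t. exp (- l * t) * norm (Gam (T t x))) \<le> K0 * norm x"
proof -
  have "integral {0..\<alpha>} (\<lambda>t. exp (- l * t) * norm (Gam (T t x))) \<le> integral {0..\<alpha>} (\<lambda>t. norm (Gam (T t x)))"
  proof (rule integral_le[OF J_int[OF x order_refl]])
    show "(\<lambda>t. norm (Gam (T t x))) integrable_on {0..\<alpha>}"
      by (intro integrable_continuous_real continuous_on_norm phi_cont[OF x]) auto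
    fix t assume t: "t \<in> {0..\<alpha>}"
    have "exp (- l * t) \<le> 1" using t l by (simp add: mult_nonneg_nonneg)
    then show "exp (- l * t) * norm (Gam (T t x)) \<le> norm (Gam (T t x))"
      by (simp add: mult_left_le_one_le)
  qed
  also have "\<dots> \<le> K0 * norm x" by (rule int_phi_bound[OF x xp])
  finally show ?thesis .
qed

lemma J_step:
  assumes x: "x \<in> DA"
  shows "J l x (real (Suc N) * \<alpha>) = integral {0..\<alpha>} (\<lambda>t. exp (- l * t) * norm (Gam (T t x))) + exp (- l * \<alpha>) * J l (T \<alpha> x) (real N * \<alpha>)"
proof -
  let ?h = "\<lambda>t. exp (- l * t) * norm (Gam (T t x))"
  have N0: "0 \<le> real N * \<alpha>" using alpha by simp
  have e: "real (Suc N) * \<alpha> = real N * \<alpha> + \<alpha>" by (simp add: algebra_simps)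
  have "J l x (real (Suc N) * \<alpha>) = integral {0..\<alpha>} ?h + integral {\<alpha>..real N * \<alpha> + \<alpha>} ?h"
    unfolding J_def e using Henstock_Kurzweil_Integration.integral_combine[of 0 \<alpha> "real N * \<alpha> + \<alpha>" ?h, OF _ _ J_int[OF x order_refl]] alpha N0
    by simp
  also have "integral {\<alpha>..real N * \<alpha> + \<alpha>} ?h = integral {0..real N * \<alpha>} (?h \<circ> (+) \<alpha>)"
    using integral_shift_Icc_real[of 0 "real N * \<alpha>" ?h \<alpha>] by simp
  also have "\<dots> = integral {0..real N * \<alpha>} (\<lambda>s. exp (- l * \<alpha>) * (exp (- l * s) * norm (Gam (T s (T \<alpha> x)))))"
  proof (rule integral_cong)
    fix s assume s: "s \<in> {0..real N * \<alpha>}"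
    have "T (\<alpha> + s) x = T s (T \<alpha> x)" using T_add[of s \<alpha> x] s alpha by (simp add: add.commute)
    moreover have "exp (- l * (\<alpha> + s)) = exp (- l * \<alpha>) * exp (- l * s)" by (simp add: exp_add[symmetric] algebra_simps)
    ultimately show "(?h \<circ> (+) \<alpha>) s = exp (- l * \<alpha>) * (exp (- l * s) * norm (Gam (T s (T \<alpha> x))))" by simp
  qed
  also have "\<dots> = exp (- l * \<alpha>) * J l (T \<alpha> x) (real N * \<alpha>)" unfolding J_def by simp
  finally show ?thesis .
qed

lemma J_bound:
  assumes l: "0 \<le> l" and q: "M * exp ((\<omega> - l) * \<alpha>) \<le> 1/2"
  shows "\<forall>x\<in>DA. 0 \<le> x \<longrightarrow> J l x (real N * \<alpha>) \<le> 2 * K0 * norm x"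
proof (induction N)
  case 0
  have K0: "0 \<le> K0" using alpha by simp
  show ?case using K0 by (simp add: J_def)
next
  case (Suc N)
  show ?case
  proof (intro ballI impI)
    fix x assume x: "x \<in> DA" and xp: "0 \<le> x"
    have Tx: "T \<alpha> x \<in> DA" "0 \<le> T \<alpha> x" using T_DA[OF x] T_nonneg xp alpha by auto
    have K0: "0 \<le> K0" using alpha by simp
    have "J l x (real (Suc N) * \<alpha>) = integral {0..\<alpha>} (\<lambda>t. exp (- l * t) * norm (Gam (T t x))) + exp (- l * \<alpha>) * J l (T \<alpha> x) (real N * \<alpha>)"
      by (rule J_step[OF x])
    also have "\<dots> \<le> K0 * norm x + exp (- l * \<alpha>) * (2 * K0 * norm (T \<alpha> x))"
      using J_first[OF l x xp] Suc.IH Tx by (intro add_mono mult_left_mono) auto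
    also have "\<dots> \<le> K0 * norm x + exp (- l * \<alpha>) * (2 * K0 * (M * exp (\<omega> * \<alpha>) * norm x))"
      using expb[of \<alpha> x] alpha K0 by (intro add_left_mono mult_left_mono) auto
    also have "exp (- l * \<alpha>) * (2 * K0 * (M * exp (\<omega> * \<alpha>) * norm x)) = 2 * K0 * norm x * (M * exp ((\<omega> - l) * \<alpha>))"
      by (simp add: algebra_simps exp_add[symmetric])
    also have "K0 * norm x + 2 * K0 * norm x * (M * exp ((\<omega> - l) * \<alpha>)) \<le> K0 * norm x + 2 * K0 * norm x * (1/2)"
      using q K0 by (intro add_left_mono mult_left_mono) auto
    finally have fin: "J l x (real (Suc N) * \<alpha>) \<le> K0 * norm x + 2 * K0 * norm x * (1/2)" .
    have "K0 * norm x + 2 * K0 * norm x * (1/2) = 2 * K0 * norm x" by (simp add: field_simps)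
    then show "J l x (real (Suc N) * \<alpha>) \<le> 2 * K0 * norm x" using fin by linarith
  qed
qed

lemma Gam_Fi_eq:
  assumes l: "l > \<omega>" and x: "x \<in> DA" and b: "0 \<le> b"
  shows "Gam (Fi l b x) = integral {0..b} (\<lambda>t. exp (- l * t) *\<^sub>R Gam (T t x))"
proof -
  let ?E = "\<lambda>t. exp (- l * t) *\<^sub>R T t x"
  have AE: "At (?E t) = exp (- l * t) *\<^sub>R T t (At x)" if "t \<in> {0..b}" for t
    using At_scale T_DA[OF x] that by auto
  have "Gam (integral {0..b} ?E) = integral {0..b} (\<lambda>t. Gam (?E t))"
  proof (rule graph_int[OF Gam_bdd b])
    show "continuous_on {0..b} ?E" by (rule g_cont) auto
    show "continuous_on {0..b} (\<lambda>t. At (?E t))"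
      using g_cont[of "{0..b}" l "At x"] by (rule continuous_on_cong[THEN iffD1, rotated 2]) (use AE in auto)
    show "\<And>t. t \<in> {0..b} \<Longrightarrow> ?E t \<in> Dt" using T_DA[OF x] Dt_scale by auto
    show "integral {0..b} ?E \<in> Dt" using Fi_DA(1)[OF b] unfolding Fi_def by auto
    have "At (integral {0..b} ?E) = Fi l b (At x)" using Fi_comm[OF l b x] unfolding Fi_def by simp
    also have "\<dots> = integral {0..b} (\<lambda>t. At (?E t))" unfolding Fi_def by (rule integral_cong) (use AE in auto)
    finally show "At (integral {0..b} ?E) = integral {0..b} (\<lambda>t. At (?E t))" .
  qed
  also have "\<dots> = integral {0..b} (\<lambda>t. exp (- l * t) *\<^sub>R Gam (T t x))"
    by (rule integral_cong) (use Gam_scale T_DA[OF x] in auto)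
  finally show ?thesis unfolding Fi_def .
qed

lemma Gam_Fi_bound:
  assumes l: "l > \<omega>" and x: "x \<in> DA" and b: "0 \<le> b"
  shows "norm (Gam (Fi l b x)) \<le> J l x b"
  unfolding Gam_Fi_eq[OF l x b] J_def
proof (rule integral_norm_bound_integral)
  show "(\<lambda>t. exp (- l * t) *\<^sub>R Gam (T t x)) integrable_on {0..b}"
    by (intro integrable_continuous_real continuous_intros phi_cont[OF x]) auto
  show "(\<lambda>t. exp (- l * t) * norm (Gam (T t x))) integrable_on {0..b}" using J_int[OF x order_refl] .
qed simp

lemma Gam_Rs_pos_bound:
  assumes l: "l > \<omega>" and q: "M * exp ((\<omega> - l) * \<alpha>) \<le> 1/2" and x: "x \<in> DA" and xp: "0 \<le> x"
  shows "norm (Gam (Rs l x)) \<le> 2 * K0 * norm x"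
proof -
  have l0: "0 \<le> l" using l om0 by simp
  obtain C where C: "C \<ge> 0" "\<And>x. x \<in> Dt \<Longrightarrow> norm (Gam x) \<le> C * (norm x + norm (At x))" using Gam_C by blast
  have bnd: "norm (Gam (Fi l (real n) x)) \<le> 2 * K0 * norm x" for n
  proof -
    obtain N :: nat where N: "real n \<le> real N * \<alpha>"
    proof -
      obtain N :: nat where "real n / \<alpha> \<le> real N" using real_arch_simple by blast
      then have "real n \<le> real N * \<alpha>" using alpha by (simp add: field_simps)
      then show ?thesis using that by blast
    qed
    have "norm (Gam (Fi l (real n) x)) \<le> J l x (real n)" by (rule Gam_Fi_bound[OF l x]) simp
    also have "\<dots> \<le> J l x (real N * \<alpha>)" by (rule J_mono[OF x _ N]) simp
    also have "\<dots> \<le> 2 * K0 * norm x" using J_bound[OF l0 q] x xp by blast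
    finally show ?thesis .
  qed
  have RD: "Rs l x \<in> DA" "At (Rs l x) = Rs l (At x)" using Rs_DA[OF l] Rs_comm[OF l x] by auto
  have FD: "Fi l (real n) x \<in> DA" "At (Fi l (real n) x) = Fi l (real n) (At x)" for n
    using Fi_DA(1) Fi_comm[OF l _ x] by auto
  have l3: "(\<lambda>n. C * (norm (Fi l (real n) x - Rs l x) + norm (Fi l (real n) (At x) - Rs l (At x)))) \<longlonglongrightarrow> C * (0 + 0)"
    by (intro tendsto_intros tendsto_norm_zero LIM_zero Rs_seq[OF l])
  have ev: "\<forall>\<^sub>F n in sequentially. norm (Gam (Fi l (real n) x) - Gam (Rs l x)) \<le> C * (norm (Fi l (real n) x - Rs l x) + norm (Fi l (real n) (At x) - Rs l (At x)))"
  proof (rule always_eventually, rule allI)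
    fix n
    have "Gam (Fi l (real n) x) - Gam (Rs l x) = Gam (Fi l (real n) x - Rs l x)" using Gam_diff FD RD by simp
    moreover have "At (Fi l (real n) x - Rs l x) = Fi l (real n) (At x) - Rs l (At x)" using At_diff FD RD by simp
    ultimately show "norm (Gam (Fi l (real n) x) - Gam (Rs l x)) \<le> C * (norm (Fi l (real n) x - Rs l x) + norm (Fi l (real n) (At x) - Rs l (At x)))"
      using C(2)[of "Fi l (real n) x - Rs l x"] FD RD Dt_diff by simp
  qed
  have "(\<lambda>n. Gam (Fi l (real n) x) - Gam (Rs l x)) \<longlonglongrightarrow> 0" using Lim_null_comparison[OF ev] l3 by simp
  then have "(\<lambda>n. Gam (Fi l (real n) x)) \<longlonglongrightarrow> Gam (Rs l x)" by (rule LIM_zero_cancel)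
  then have "(\<lambda>n. norm (Gam (Fi l (real n) x))) \<longlonglongrightarrow> norm (Gam (Rs l x))" by (rule tendsto_norm)
  then show ?thesis by (rule tendsto_le[OF trivial_limit_sequentially tendsto_const]) (use bnd in auto)
qed

end


context sg2
begin

lemma Gam_Rs_cont:
  assumes l: "l > \<omega>"
  obtains C' where "C' \<ge> 0" "\<And>y. norm (Gam (Rs l y)) \<le> C' * norm y"
proof -
  obtain C where C: "C \<ge> 0" "\<And>x. x \<in> Dt \<Longrightarrow> norm (Gam x) \<le> C * (norm x + norm (At x))" using Gam_C by blast
  have l0: "l \<ge> 0" using l om0 by simp
  define C' where "C' = C * ((1 + l) * (M / (l - \<omega>)) + 1)"
  have C'0: "C' \<ge> 0" unfolding C'_def using C l0 M1 l by simp
  have "norm (Gam (Rs l y)) \<le> C' * norm y" for y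
  proof -
    have RD: "Rs l y \<in> Dt" "At (Rs l y) = l *\<^sub>R Rs l y - y" using Rs_DA[OF l] by auto
    have Rn: "norm (Rs l y) \<le> (M / (l - \<omega>)) * norm y" using Rs_norm[OF l, of y] by simp
    have "norm (Gam (Rs l y)) \<le> C * (norm (Rs l y) + norm (l *\<^sub>R Rs l y - y))" using C(2)[OF RD(1)] RD(2) by simp
    also have "norm (l *\<^sub>R Rs l y - y) \<le> l * norm (Rs l y) + norm y"
      using norm_triangle_ineq4[of "l *\<^sub>R Rs l y" y] l0 by simp
    then have "C * (norm (Rs l y) + norm (l *\<^sub>R Rs l y - y)) \<le> C * ((1 + l) * norm (Rs l y) + norm y)"
      using C(1) by (intro mult_left_mono) (auto simp: algebra_simps)
    also have "\<dots> \<le> C * ((1 + l) * ((M / (l - \<omega>)) * norm y) + norm y)"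
      using C(1) l0 Rn by (intro mult_left_mono add_right_mono) auto
    also have "\<dots> = C' * norm y" unfolding C'_def by (simp add: algebra_simps)
    finally show ?thesis .
  qed
  then show ?thesis using that C'0 by blast
qed

lemma Gam_Rs_nonneg_bound:
  assumes l: "l > \<omega>" and q: "M * exp ((\<omega> - l) * \<alpha>) \<le> 1/2" and yp: "0 \<le> y"
  shows "norm (Gam (Rs l y)) \<le> 2 * K0 * norm y"
proof -
  obtain C' where C': "C' \<ge> 0" "\<And>y. norm (Gam (Rs l y)) \<le> C' * norm y" using Gam_Rs_cont[OF l] by blast
  have K0: "0 \<le> K0" using alpha by simp
  show ?thesis
  proof (rule field_le_epsilon)
    fix d :: real assume d: "0 < d"
    define e where "e = d / (C' + 2 * K0 + 1)"
    have e: "e > 0" unfolding e_def using d C' K0 by simp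
    obtain x where x: "x \<in> DA" "0 \<le> x" "norm (y - x) < e" using DA_dense[OF e, of y] yp by blast
    have RD: "Rs l (y - x) \<in> Dt" "Rs l x \<in> Dt" using Rs_DA[OF l] by auto
    have "Gam (Rs l y) = Gam (Rs l (y - x)) + Gam (Rs l x)"
      using Gam_add[OF RD] Rs_diff[OF l] by simp
    then have "norm (Gam (Rs l y)) \<le> norm (Gam (Rs l (y - x))) + norm (Gam (Rs l x))" by (simp add: norm_triangle_ineq)
    also have "\<dots> \<le> C' * norm (y - x) + 2 * K0 * norm x"
      using C'(2) Gam_Rs_pos_bound[OF l q x(1) x(2)] by (intro add_mono) auto
    also have "\<dots> \<le> C' * e + 2 * K0 * (norm y + e)"
    proof (intro add_mono mult_left_mono)
      show "norm (y - x) \<le> e" using x by simp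
      show "norm x \<le> norm y + e" using x(3) norm_triangle_ineq3[of y x] by (metis add.commute add_le_cancel_left diff_le_eq norm_minus_commute norm_triangle_ineq2 order.strict_implies_order order_trans)
    qed (use C' K0 in auto)
    also have "\<dots> = 2 * K0 * norm y + (C' + 2 * K0) * e" by (simp add: algebra_simps)
    also have "(C' + 2 * K0) * e \<le> d"
    proof -
      have "(C' + 2 * K0) * e \<le> (C' + 2 * K0 + 1) * e" using e by simp
      also have "\<dots> = d" unfolding e_def using C' K0 by simp
      finally show ?thesis .
    qed
    then have "2 * K0 * norm y + (C' + 2 * K0) * e \<le> 2 * K0 * norm y + d" by simp
    finally show "norm (Gam (Rs l y)) \<le> 2 * K0 * norm y + d" .
  qed
qed

lemma Gam_Rs_bound:
  assumes l: "l > \<omega>" and q: "M * exp ((\<omega> - l) * \<alpha>) \<le> 1/2"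
  shows "norm (Gam (Rs l y)) \<le> 4 * K0 * norm y"
proof -
  have ypn: "y = pprt y - (- nprt y)" using prts[of y] by simp
  have RD: "Rs l (pprt y) \<in> Dt" "Rs l (- nprt y) \<in> Dt" using Rs_DA[OF l] by auto
  have "Gam (Rs l y) = Gam (Rs l (pprt y)) - Gam (Rs l (- nprt y))"
    using Gam_diff[OF RD] Rs_diff[OF l, of "pprt y" "- nprt y"] ypn by metis
  then have "norm (Gam (Rs l y)) \<le> norm (Gam (Rs l (pprt y))) + norm (Gam (Rs l (- nprt y)))"
    by (simp add: norm_triangle_ineq4)
  also have "\<dots> \<le> 2 * K0 * norm (pprt y) + 2 * K0 * norm (- nprt y)"
    by (intro add_mono Gam_Rs_nonneg_bound[OF l q]) auto
  also have "\<dots> \<le> 2 * K0 * norm y + 2 * K0 * norm y"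
    using norm_pprt_le[of y] norm_nprt_le[of y] alpha by (intro add_mono mult_left_mono) auto
  finally have fin: "norm (Gam (Rs l y)) \<le> 2 * K0 * norm y + 2 * K0 * norm y" .
  have "2 * K0 * norm y + 2 * K0 * norm y = 4 * K0 * norm y" by (simp add: algebra_simps)
  then show ?thesis using fin by linarith
qed

definition l1 :: real where "l1 = \<omega> + ln (2 * M) / \<alpha> + 1"

lemma l1_good:
  assumes "l \<ge> l1"
  shows "l > \<omega>" "M * exp ((\<omega> - l) * \<alpha>) \<le> 1/2"
proof -
  have lnpos: "ln (2 * M) > 0" using M1 by simp
  show "l > \<omega>" using assms lnpos alpha unfolding l1_def
    by (smt (verit) divide_pos_pos)
  have "(\<omega> - l) * \<alpha> \<le> - (ln (2 * M) / \<alpha>) * \<alpha>"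
    using assms alpha lnpos unfolding l1_def by (intro mult_right_mono) auto
  also have "\<dots> = - ln (2 * M)" using alpha by simp
  finally have "exp ((\<omega> - l) * \<alpha>) \<le> exp (- ln (2 * M))" by simp
  also have "\<dots> = 1 / (2 * M)" using M1 by (simp add: exp_minus inverse_eq_divide)
  finally show "M * exp ((\<omega> - l) * \<alpha>) \<le> 1/2" using M1 by (simp add: field_simps)
qed

lemma inv_lim: "((\<lambda>n::nat. K / (real n - \<omega>)) \<longlonglongrightarrow> 0)"
proof (rule LIMSEQ_I)
  fix r :: real assume r: "0 < r"
  obtain N :: nat where N: "\<omega> + \<bar>K\<bar> / r < real N" using reals_Archimedean2 by blast
  show "\<exists>no. \<forall>n\<ge>no. norm (K / (real n - \<omega>) - 0) < r"
  proof (intro exI[of _ N] allI impI)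
    fix n assume n: "N \<le> n"
    have pos: "real n - \<omega> > \<bar>K\<bar> / r" using N n by linarith
    have rp: "real n - \<omega> > 0" using pos r by (smt (verit) divide_nonneg_pos abs_ge_zero)
    have "\<bar>K\<bar> < r * (real n - \<omega>)" using pos r by (simp add: field_simps)
    then show "norm (K / (real n - \<omega>) - 0) < r" using rp by (simp add: abs_divide field_simps)
  qed
qed

lemma Gam_Rs_DA_tendsto:
  assumes w: "w \<in> DA"
  shows "(\<lambda>n. Gam (Rs (real n) w)) \<longlonglongrightarrow> 0"
proof -
  obtain C where C: "C \<ge> 0" "\<And>x. x \<in> Dt \<Longrightarrow> norm (Gam x) \<le> C * (norm x + norm (At x))" using Gam_C by blast
  have ev: "\<forall>\<^sub>F n in sequentially. norm (Gam (Rs (real n) w)) \<le> (C * M * (norm w + norm (At w))) / (real n - \<omega>)"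
  proof -
    obtain N :: nat where N: "\<omega> < real N" using reals_Archimedean2 by blast
    show ?thesis unfolding eventually_sequentially
    proof (intro exI[of _ N] allI impI)
      fix n assume n: "N \<le> n"
      have l: "real n > \<omega>" using N n by linarith
      have RD: "Rs (real n) w \<in> Dt" "At (Rs (real n) w) = Rs (real n) (At w)" using Rs_DA[OF l] Rs_comm[OF l w] by auto
      have "norm (Gam (Rs (real n) w)) \<le> C * (norm (Rs (real n) w) + norm (Rs (real n) (At w)))" using C(2)[OF RD(1)] RD(2) by simp
      also have "\<dots> \<le> C * (M * norm w / (real n - \<omega>) + M * norm (At w) / (real n - \<omega>))"
        using Rs_norm[OF l] C(1) by (intro mult_left_mono add_mono) auto
      also have "\<dots> = (C * M * (norm w + norm (At w))) / (real n - \<omega>)" by (simp add: add_divide_distrib ring_distribs)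
      finally show "norm (Gam (Rs (real n) w)) \<le> (C * M * (norm w + norm (At w))) / (real n - \<omega>)" .
    qed
  qed
  show ?thesis by (rule Lim_null_comparison[OF ev inv_lim])
qed

lemma Gam_Rs_tendsto: "(\<lambda>n. Gam (Rs (real n) w)) \<longlonglongrightarrow> 0"
proof (rule LIMSEQ_I)
  fix r :: real assume r: "0 < r"
  have K0: "0 \<le> K0" using alpha by simp
  define e where "e = r / (2 * (4 * K0 + 1))"
  have e: "e > 0" unfolding e_def using r K0 by simp
  obtain x where x: "x \<in> DA" "norm (w - x) < e" using DA_dense[OF e, of w] by blast
  obtain N1 where N1: "\<And>n. n \<ge> N1 \<Longrightarrow> norm (Gam (Rs (real n) x) - 0) < r / 2"
    using LIMSEQ_D[OF Gam_Rs_DA_tendsto[OF x(1)], of "r/2"] r by auto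
  obtain N2 :: nat where N2: "l1 \<le> real N2" using real_arch_simple by blast
  show "\<exists>no. \<forall>n\<ge>no. norm (Gam (Rs (real n) w) - 0) < r"
  proof (intro exI[of _ "max N1 N2"] allI impI)
    fix n assume n: "max N1 N2 \<le> n"
    have ln: "l1 \<le> real n" using N2 n by linarith
    note g = l1_good[OF ln]
    have RD: "Rs (real n) (w - x) \<in> Dt" "Rs (real n) x \<in> Dt" using Rs_DA[OF g(1)] by auto
    have "Gam (Rs (real n) w) = Gam (Rs (real n) (w - x)) + Gam (Rs (real n) x)"
      using Gam_add[OF RD] Rs_diff[OF g(1)] by simp
    then have "norm (Gam (Rs (real n) w)) \<le> norm (Gam (Rs (real n) (w - x))) + norm (Gam (Rs (real n) x))"
      by (simp add: norm_triangle_ineq)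
    also have "\<dots> < 4 * K0 * norm (w - x) + 1 * e + r / 2"
      using Gam_Rs_bound[OF g, of "w - x"] N1[of n] n e by simp
    also have "4 * K0 * norm (w - x) + 1 * e \<le> (4 * K0 + 1) * e"
    proof -
      have h: "4 * K0 * norm (w - x) \<le> 4 * K0 * e" using x(2) K0 by (intro mult_left_mono) auto
      show ?thesis by (simp only: distrib_right) (rule add_right_mono[OF h])
    qed
    also have "(4 * K0 + 1) * e = r / 2"
    proof -
      have gen: "a * (r / (2 * a)) = r / 2" if "a > 0" for a :: real using that by (simp add: field_simps)
      show ?thesis unfolding e_def by (rule gen) (use K0 in simp)
    qed
    finally show "norm (Gam (Rs (real n) w) - 0) < r" by simp
  qed
qed

end


context sg2
begin

lemma part1_pos:
  assumes surj: "G ` Dt = UNIV" and A2i: "\<exists>l1. \<forall>l\<ge>l1. \<forall>v. 0 \<le> v \<longrightarrow> 0 \<le> dirichlet Dt At G l v"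
    and A2iv: "\<forall>v u. bounded_linear (u :: 'v \<Rightarrow> real) \<longrightarrow> ((\<lambda>l. u (Gam (dirichlet Dt At G l v))) \<longlongrightarrow> 0) at_top"
    and vp: "0 \<le> v"
  shows "(\<lambda>n::nat. norm (Gam (dirichlet Dt At G (real n) v))) \<longlonglongrightarrow> 0"
proof -
  obtain L1 where L1: "\<And>l v. l \<ge> L1 \<Longrightarrow> 0 \<le> v \<Longrightarrow> 0 \<le> dirichlet Dt At G l v" using A2i by blast
  obtain N0 :: nat where N0: "max L1 \<omega> + 1 < real N0" using reals_Archimedean2 by blast
  define xs where "xs k = Gam (dirichlet Dt At G (real (k + N0)) v)" for k
  have big: "real (k + N0) > \<omega>" "real (k + N0) \<ge> L1" for k using N0 by auto
  have pos: "0 \<le> xs k" for k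
    unfolding xs_def using Gam_pos dir_prop(1)[OF big(1) surj] L1[OF big(2) vp] by blast
  have dec: "xs (Suc k) \<le> xs k" for k
  proof -
    define l where "l = real (k + N0)"
    define m where "m = real (Suc k + N0)"
    have l: "l > \<omega>" "l \<ge> L1" unfolding l_def using big by auto
    have m: "m > \<omega>" "m \<ge> L1" unfolding m_def using big[of "Suc k"] by auto
    have ml: "m - l = 1" unfolding l_def m_def by simp
    have eq: "dirichlet Dt At G l v - dirichlet Dt At G m v = Rs l (dirichlet Dt At G m v)"
      using dir_resid[OF l(1) m(1) surj, of v] ml by simp
    have "0 \<le> Rs l (dirichlet Dt At G m v)" using Rs_pos[OF l(1) L1[OF m(2) vp]] .
    moreover have "Rs l (dirichlet Dt At G m v) \<in> Dt" using Rs_DA[OF l(1)] by auto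
    ultimately have "0 \<le> Gam (dirichlet Dt At G l v - dirichlet Dt At G m v)" using Gam_pos eq by simp
    also have "Gam (dirichlet Dt At G l v - dirichlet Dt At G m v) = Gam (dirichlet Dt At G l v) - Gam (dirichlet Dt At G m v)"
      using Gam_diff dir_prop(1)[OF l(1) surj] dir_prop(1)[OF m(1) surj] by blast
    finally show ?thesis unfolding xs_def l_def m_def by simp
  qed
  have weak: "(\<lambda>k. u (xs k)) \<longlonglongrightarrow> 0" if u: "bounded_linear (u :: 'v \<Rightarrow> real)" for u
  proof -
    have "((\<lambda>l. u (Gam (dirichlet Dt At G l v))) \<longlongrightarrow> 0) at_top" using A2iv u by blast
    then have "(\<lambda>n. u (Gam (dirichlet Dt At G (real n) v))) \<longlonglongrightarrow> 0"
      by (rule filterlim_compose[OF _ filterlim_real_sequentially])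
    then show ?thesis unfolding xs_def by (rule LIMSEQ_ignore_initial_segment)
  qed
  have "(\<lambda>k. norm (xs k)) \<longlonglongrightarrow> 0" by (rule dini_weak[OF pos dec weak])
  then show ?thesis unfolding xs_def by (rule LIMSEQ_offset)
qed

lemma part1:
  assumes surj: "G ` Dt = UNIV" and A2i: "\<exists>l1. \<forall>l\<ge>l1. \<forall>v. 0 \<le> v \<longrightarrow> 0 \<le> dirichlet Dt At G l v"
    and A2iv: "\<forall>v u. bounded_linear (u :: 'v \<Rightarrow> real) \<longrightarrow> ((\<lambda>l. u (Gam (dirichlet Dt At G l v))) \<longlongrightarrow> 0) at_top"
  shows "(\<lambda>n::nat. norm (Gam (dirichlet Dt At G (real n) v))) \<longlonglongrightarrow> 0"
proof -
  have p1: "(\<lambda>n::nat. norm (Gam (dirichlet Dt At G (real n) (pprt v)))) \<longlonglongrightarrow> 0"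
    by (rule part1_pos[OF surj A2i A2iv]) simp
  have p2: "(\<lambda>n::nat. norm (Gam (dirichlet Dt At G (real n) (- nprt v)))) \<longlonglongrightarrow> 0"
    by (rule part1_pos[OF surj A2i A2iv]) simp
  have s: "(\<lambda>n::nat. norm (Gam (dirichlet Dt At G (real n) (pprt v))) + norm (Gam (dirichlet Dt At G (real n) (- nprt v)))) \<longlonglongrightarrow> 0"
    using tendsto_add[OF p1 p2] by simp
  have ev: "\<forall>\<^sub>F n in sequentially. norm (norm (Gam (dirichlet Dt At G (real n) v))) \<le>
      norm (Gam (dirichlet Dt At G (real n) (pprt v))) + norm (Gam (dirichlet Dt At G (real n) (- nprt v)))"
  proof -
    obtain N :: nat where N: "\<omega> < real N" using reals_Archimedean2 by blast
    show ?thesis unfolding eventually_sequentially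
    proof (intro exI[of _ N] allI impI)
      fix n assume n: "N \<le> n"
      have l: "real n > \<omega>" using N n by linarith
      have v: "v = pprt v - (- nprt v)" using prts[of v] by simp
      have "dirichlet Dt At G (real n) v = dirichlet Dt At G (real n) (pprt v) - dirichlet Dt At G (real n) (- nprt v)"
        using dir_diff[OF l surj, of "pprt v" "- nprt v"] v by simp
      then have "Gam (dirichlet Dt At G (real n) v) = Gam (dirichlet Dt At G (real n) (pprt v)) - Gam (dirichlet Dt At G (real n) (- nprt v))"
        using Gam_diff dir_prop(1)[OF l surj] by simp
      then show "norm (norm (Gam (dirichlet Dt At G (real n) v))) \<le>
          norm (Gam (dirichlet Dt At G (real n) (pprt v))) + norm (Gam (dirichlet Dt At G (real n) (- nprt v)))"
        by (simp add: norm_triangle_ineq4)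
    qed
  qed
  show ?thesis by (rule Lim_null_comparison[OF ev s])
qed

lemma part2:
  assumes surj: "G ` Dt = UNIV" and A2i: "\<exists>l1. \<forall>l\<ge>l1. \<forall>v. 0 \<le> v \<longrightarrow> 0 \<le> dirichlet Dt At G l v"
    and A2iv: "\<forall>v u. bounded_linear (u :: 'v \<Rightarrow> real) \<longrightarrow> ((\<lambda>l. u (Gam (dirichlet Dt At G l v))) \<longlongrightarrow> 0) at_top"
    and z: "z \<in> Dt"
  shows "(\<lambda>n::nat. norm (Gam (real n *\<^sub>R resolvent DA At (real n) z) - Gam z)) \<longlonglongrightarrow> 0"
proof -
  have s: "(\<lambda>n::nat. norm (Gam (Rs (real n) (At z))) + norm (Gam (dirichlet Dt At G (real n) (G z)))) \<longlonglongrightarrow> 0"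
    using tendsto_add[OF tendsto_norm_zero[OF Gam_Rs_tendsto] part1[OF surj A2i A2iv]] by simp
  have ev: "\<forall>\<^sub>F n in sequentially. norm (norm (Gam (real n *\<^sub>R resolvent DA At (real n) z) - Gam z)) \<le>
      norm (Gam (Rs (real n) (At z))) + norm (Gam (dirichlet Dt At G (real n) (G z)))"
  proof -
    obtain N :: nat where N: "\<omega> < real N" using reals_Archimedean2 by blast
    show ?thesis unfolding eventually_sequentially
    proof (intro exI[of _ N] allI impI)
      fix n assume n: "N \<le> n"
      have l: "real n > \<omega>" using N n by linarith
      have RD: "real n *\<^sub>R Rs (real n) z \<in> Dt" using Rs_DA[OF l] Dt_scale by auto
      have RD2: "Rs (real n) (At z) \<in> Dt" using Rs_DA[OF l] by auto
      have "Gam (real n *\<^sub>R resolvent DA At (real n) z) - Gam z = Gam (real n *\<^sub>R Rs (real n) z - z)"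
        using resolvent_eq[OF l] Gam_diff[OF RD z] by simp
      also have "\<dots> = Gam (Rs (real n) (At z) - dirichlet Dt At G (real n) (G z))"
        using nR_identity[OF l surj z] by simp
      also have "\<dots> = Gam (Rs (real n) (At z)) - Gam (dirichlet Dt At G (real n) (G z))"
        using Gam_diff[OF RD2 dir_prop(1)[OF l surj]] .
      finally show "norm (norm (Gam (real n *\<^sub>R resolvent DA At (real n) z) - Gam z)) \<le>
          norm (Gam (Rs (real n) (At z))) + norm (Gam (dirichlet Dt At G (real n) (G z)))"
        by (simp add: norm_triangle_ineq4)
    qed
  qed
  show ?thesis by (rule Lim_null_comparison[OF ev s])
qed

end

theorem mainTheorem3:
  fixes At :: "'x::banach_lattice \<Rightarrow> 'x" and Dt :: "'x set"
    and G Gam :: "'x \<Rightarrow> 'v::banach_lattice"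
    and T :: "real \<Rightarrow> 'x \<Rightarrow> 'x" and p :: real
  defines "DA \<equiv> {x \<in> Dt. G x = 0}"
    and "D \<equiv> dirichlet Dt At G"
    and "R \<equiv> resolvent {x \<in> Dt. G x = 0} At"
  assumes op: "closed_dense_operator Dt At"
    and G_bdd: "graph_bounded Dt At G" and Gam_bdd: "graph_bounded Dt At Gam"
    \<comment> \<open>Assumption 1\<close>
    and gen: "generates DA At T"
    and T_pos: "\<forall>t\<ge>0. \<forall>x. 0 \<le> x \<longrightarrow> 0 \<le> T t x"
    and G_surj: "G ` Dt = UNIV"
    \<comment> \<open>Assumption 2\<close>
    and p: "1 \<le> p"
    and A2i: "\<exists>l1. \<forall>l\<ge>l1. \<forall>v. 0 \<le> v \<longrightarrow> 0 \<le> D l v"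
    and A2ii_pos: "\<forall>x\<in>Dt. 0 \<le> x \<longrightarrow> 0 \<le> Gam x"
    and A2ii_adm: "\<exists>\<alpha>>0. \<exists>\<gamma>>0. \<forall>x\<in>DA. 0 \<le> x \<longrightarrow>
        (\<integral>\<^sup>+ t\<in>{0..\<alpha>}. ennreal (norm (Gam (T t x)) powr p) \<partial>lborel)
          \<le> ennreal (\<gamma> powr p * norm x powr p)"
    and A2iii: "\<exists>l0. ereal l0 > growth_bound T \<and>
        (\<forall>v. \<exists>C. \<forall>l\<ge>l0. norm (l *\<^sub>R D l v) \<le> C)"
    and A2iv: "\<forall>v u. bounded_linear (u :: 'v \<Rightarrow> real) \<longrightarrow>
        ((\<lambda>l. u (Gam (D l v))) \<longlongrightarrow> 0) at_top"
  shows "(\<forall>v. ((\<lambda>n::nat. norm (Gam (D (real n) v))) \<longlonglongrightarrow> 0)) \<and>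
         (\<forall>z\<in>Dt. ((\<lambda>n::nat. norm (Gam (real n *\<^sub>R R (real n) z) - Gam z)) \<longlonglongrightarrow> 0))"
proof -
  obtain l0 where l0: "ereal l0 > growth_bound T" using A2iii by blast
  then have "Inf {ereal w | w. \<exists>M. \<forall>t\<ge>0. \<forall>x. norm (T t x) \<le> M * exp (w * t) * norm x} < ereal l0"
    unfolding growth_bound_def by simp
  then obtain w M0 where wM: "\<And>t x. t \<ge> 0 \<Longrightarrow> norm (T t x) \<le> M0 * exp (w * t) * norm x"
    unfolding Inf_less_iff by blast
  define \<omega> where "\<omega> = max w 0"
  define M where "M = max M0 1"
  have expb: "norm (T t x) \<le> M * exp (\<omega> * t) * norm x" if t: "0 \<le> t" for t x
  proof -
    have "norm (T t x) \<le> M0 * exp (w * t) * norm x" using wM[OF t] .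
    also have "\<dots> \<le> M * exp (w * t) * norm x" unfolding M_def by (intro mult_right_mono) auto
    also have "\<dots> \<le> M * exp (\<omega> * t) * norm x"
      unfolding M_def \<omega>_def using t by (intro mult_right_mono mult_left_mono) (auto intro: mult_right_mono)
    finally show ?thesis .
  qed
  obtain \<alpha> \<gamma> where ag: "\<alpha> > 0" "\<gamma> > 0" "\<forall>x\<in>DA. 0 \<le> x \<longrightarrow>
        (\<integral>\<^sup>+ t\<in>{0..\<alpha>}. ennreal (norm (Gam (T t x)) powr p) \<partial>lborel) \<le> ennreal (\<gamma> powr p * norm x powr p)"
    using A2ii_adm by blast
  interpret S: sg2 At Dt G T M \<omega> Gam \<alpha> \<gamma> p
  proof (unfold_locales)
    show "closed_dense_operator Dt At" by (rule op)
    show "graph_bounded Dt At G" by (rule G_bdd)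
    show "generates {x \<in> Dt. G x = 0} At T" using gen unfolding DA_def .
    show "\<forall>t\<ge>0. \<forall>x. 0 \<le> x \<longrightarrow> 0 \<le> T t x" by (rule T_pos)
    show "1 \<le> M" unfolding M_def by simp
    show "0 \<le> \<omega>" unfolding \<omega>_def by simp
    show "\<And>t x. 0 \<le> t \<Longrightarrow> norm (T t x) \<le> M * exp (\<omega> * t) * norm x" by (rule expb)
    show "graph_bounded Dt At Gam" by (rule Gam_bdd)
    show "\<forall>x\<in>Dt. 0 \<le> x \<longrightarrow> 0 \<le> Gam x" by (rule A2ii_pos)
    show "1 \<le> p" by (rule p)
    show "\<alpha> > 0" "\<gamma> > 0" using ag by auto
    show "\<forall>x\<in>{x \<in> Dt. G x = 0}. 0 \<le> x \<longrightarrow>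
        (\<integral>\<^sup>+ t\<in>{0..\<alpha>}. ennreal (norm (Gam (T t x)) powr p) \<partial>lborel) \<le> ennreal (\<gamma> powr p * norm x powr p)"
      using ag(3) unfolding DA_def .
  qed
  have A2i': "\<exists>l1. \<forall>l\<ge>l1. \<forall>v. 0 \<le> v \<longrightarrow> 0 \<le> dirichlet Dt At G l v" using A2i unfolding D_def .
  have A2iv': "\<forall>v u. bounded_linear (u :: 'v \<Rightarrow> real) \<longrightarrow> ((\<lambda>l. u (Gam (dirichlet Dt At G l v))) \<longlongrightarrow> 0) at_top"
    using A2iv unfolding D_def .
  show ?thesis
    unfolding D_def R_def
    using S.part1[OF G_surj A2i' A2iv'] S.part2[OF G_surj A2i' A2iv'] by blast
qed


end
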